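(* Let $\{X_s,\|\cdot\|_s\}_{s\in\mathbb N_0}$ be a sequence of Banach spaces satisfying (F1)–(F3), $\{\Theta_s,|||\cdot|||_s\}_{s\in\mathbb N_0}$ a sequence of $\lambda_s$–$BK$-spaces satisfying (F1)–(F3), and let $\{g_i\}_{i=1}^\infty\in(X_F^* )^{\mathbb N}$ be an $F$-frame for $X_F$ with respect to $\Theta_F$. Then: (a) for every $s\in\mathbb N_0$, $\{g_i^s\}_{i=1}^\infty$ is a Banach frame for $X_s$ with respect to $\Theta_s$; (b) if all $\Theta_s$ are $CB$-spaces, there exists $\{f_i\}_{i=1}^\infty\in (X_F)^{\mathbb N}$ which is a $DF$-Bessel sequence for $X_F^*$ with respect to $\Theta_F^*$ such that $f=\sum_{i=1}^\infty g_i(f)f_i$ for all $f\in X_F$ (convergence in $X_F$), $g=\sum_{i=1}^\infty g(f_i)g_i$ for all $g\in X_F^*$ (convergence in $X_F^*$), and $f=\sum_{i=1}^\infty g_i^s(f)f_i$ for all $f\in X_s$, $s\in\mathbb N_0$ (convergence in $X_s$); (c) if all $\Theta_s$ and $\Theta_s^*$ are $CB$-spaces, there exists $\{f_i\}\in(X_F)^{\mathbb N}$ which is a pre-$DF$-frame for $X_F^*$ with respect to $\Theta_F^*$ satisfying the three expansions in (b) and moreover $g=\sum_{i=1}^\infty g(f_i)g_i^s$ for all $g\in X_s^*$, $s\in\mathbb N_0$; (d) if all $\Theta_s$ are reflexive $CB$-spaces, there exists $\{f_i\}\in(X_F)^{\mathbb N}$ which is a $DF$-frame for $X_F^*$ with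 respect to $\Theta_F^*$ satisfying all four expansions in (b) and (c).
   Context: Conditions (F1)–(F3) for a sequence $\{Y_s,|\cdot|_s\}_{s\in\mathbb N_0}$ of separable Banach spaces: (F1) $\{0\}\neq\bigcap_sY_s\subseteq\dots\subseteq Y_1\subseteq Y_0$; (F2) $|\cdot|_0\le|\cdot|_1\le\dots$; (F3) $Y_F:=\bigcap_sY_s$ dense in each $Y_s$. $X_F=\bigcap_sX_s$, $\Theta_F=\bigcap_s\Theta_s$. $BK$-space: Banach sequence space with continuous coordinate functionals; $\lambda$–$BK$-space: $BK$-space containing the canonical vectors $e_i$ with $|||\sum_{i=1}^nc_ie_i|||\le\lambda|||\{c_i\}|||$; $CB$-space: $BK$-space in which the canonical vectors form a Schauder basis. For a $CB$-space $\Theta$, $\Theta^*$ is identified with the $BK$-space $\{\{g(e_i)\}_{i=1}^\infty:g\in\Theta^*\}$ normed by $|||\{g(e_i)\}|||:=\|g\|_{\Theta^*}$. For a Banach space $X$ and $BK$-space $\Theta$: $\{g_i\}\subset X^*$ is a $\Theta$-Bessel sequence if $\{g_i(f)\}\in\Theta$ and $|||\{g_i(f)\}|||\le B\|f\|$ for all $f\in X$; a $\Theta$-frame if moreover $A\|f\|\le|||\{g_i(f)\}|||$ with $A>0$; a Banach frame w.r.t. $\Theta$ if it is a $\Theta$-frame and there is a bounded operator $V:\Theta\to X$ with $V(\{g_i(f)\})=f$, $f\in X$. (For $\{f_i\}\subset X\subseteq X^{**}$ these notions are applied to $X^*$ via $g\mapsto\{g(f_i)\}$.) Pre-$F$-frame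 / $F$-Bessel / $F$-frame: $\{g_i\}\in(X_F^* )^{\mathbb N}$ with $\{g_i(f)\}\in\Theta_F$ for $f\in X_F$ and for each $s$ constants $0<A_s\le B_s$ with $A_s\|f\|_s\le|||\{g_i(f)\}|||_s\le B_s\|f\|_s$ (pre-$F$-frame; only the upper inequality: $F$-Bessel); an $F$-frame is a pre-$F$-frame with an $F$-bounded $V:\Theta_F\to X_F$, $V(\{g_i(f)\})=f$ for $f\in X_F$, where $F$-bounded means $\|Vc\|_s\le K_s|||c|||_s$ for each $s$. For an $F$-Bessel sequence, $g_i^s\in X_s^*$ denotes the unique continuous extension of $g_i$ from $X_F$ to $X_s$. When all $\Theta_s$ are $CB$-spaces, $\{f_i\}\in(X_F)^{\mathbb N}$ is a $DF$-Bessel sequence (resp. pre-$DF$-frame, resp. $DF$-frame) for $X_F^*$ w.r.t. $\Theta_F^*$ if for every $s$ it is a $\Theta_s^*$-Bessel sequence (resp. $\Theta_s^*$-frame, resp. Banach frame w.r.t. $\Theta_s^*$) for $X_s^*$. *)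

theory Defs
  imports "HOL-Analysis.Analysis" "HOL-Library.Function_Algebras"
begin

instantiation "fun" :: (type, real_vector) real_vector
begin
definition scaleR_fun :: "real \<Rightarrow> ('a \<Rightarrow> 'b) \<Rightarrow> 'a \<Rightarrow> 'b" where
  "scaleR_fun r f = (\<lambda>x. r *\<^sub>R f x)"
instance by standard (auto simp: scaleR_fun_def fun_eq_iff scaleR_add_right scaleR_add_left)
end

(* Normed / Banach spaces realised as subspaces X of an ambient real vector space,
   carrying their own norm N. *)

definition is_norm_on :: "'a::real_vector set \<Rightarrow> ('a \<Rightarrow> real) \<Rightarrow> bool" where
  "is_norm_on X N \<longleftrightarrow> 0 \<in> X \<and> (\<forall>x\<in>X. \<forall>y\<in>X. x + y \<in> X) \<and> (\<forall>x\<in>X. \<forall>c. c *\<^sub>R x \<in> X)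
     \<and> (\<forall>x\<in>X. 0 \<le> N x) \<and> (\<forall>x\<in>X. N x = 0 \<longleftrightarrow> x = 0)
     \<and> (\<forall>x\<in>X. \<forall>c. N (c *\<^sub>R x) = \<bar>c\<bar> * N x)
     \<and> (\<forall>x\<in>X. \<forall>y\<in>X. N (x + y) \<le> N x + N y)"

definition banach_on :: "'a::real_vector set \<Rightarrow> ('a \<Rightarrow> real) \<Rightarrow> bool" where
  "banach_on X N \<longleftrightarrow> is_norm_on X N \<and>
     (\<forall>u. (\<forall>n. u n \<in> X) \<and> (\<forall>e>0. \<exists>M. \<forall>m\<ge>M. \<forall>n\<ge>M. N (u m - u n) < e)
          \<longrightarrow> (\<exists>x\<in>X. (\<lambda>n. N (u n - x)) \<longlonglongrightarrow> 0))"

definition dense_in :: "'a::real_vector set \<Rightarrow> ('a \<Rightarrow> real) \<Rightarrow> 'a set \<Rightarrow> bool" where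
  "dense_in X N D \<longleftrightarrow> D \<subseteq> X \<and> (\<forall>x\<in>X. \<forall>e>0. \<exists>d\<in>D. N (x - d) < e)"

definition separable_banach :: "'a::real_vector set \<Rightarrow> ('a \<Rightarrow> real) \<Rightarrow> bool" where
  "separable_banach X N \<longleftrightarrow> banach_on X N \<and> (\<exists>D. countable D \<and> dense_in X N D)"

(* Conditions (F1)-(F3) for a sequence of separable Banach spaces *)
definition F_seq :: "(nat \<Rightarrow> 'a::real_vector set) \<Rightarrow> (nat \<Rightarrow> 'a \<Rightarrow> real) \<Rightarrow> bool" where
  "F_seq X N \<longleftrightarrow> (\<forall>s. separable_banach (X s) (N s))
     \<and> (\<exists>x\<in>(\<Inter>s. X s). x \<noteq> 0) \<and> (\<forall>s. X (Suc s) \<subseteq> X s)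
     \<and> (\<forall>s. \<forall>x\<in>X (Suc s). N s x \<le> N (Suc s) x)
     \<and> (\<forall>s. dense_in (X s) (N s) (\<Inter>r. X r))"

definition bounded_functional_on :: "'a::real_vector set \<Rightarrow> ('a \<Rightarrow> real) \<Rightarrow> ('a \<Rightarrow> real) \<Rightarrow> bool" where
  "bounded_functional_on X N g \<longleftrightarrow> (\<forall>x\<in>X. \<forall>y\<in>X. g (x + y) = g x + g y)
     \<and> (\<forall>x\<in>X. \<forall>c. g (c *\<^sub>R x) = c * g x) \<and> (\<exists>K. \<forall>x\<in>X. \<bar>g x\<bar> \<le> K * N x)"

definition dual_set :: "'a::real_vector set \<Rightarrow> ('a \<Rightarrow> real) \<Rightarrow> ('a \<Rightarrow> real) set" where
  "dual_set X N = {g. bounded_functional_on X N g}"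

definition fnorm :: "'a::real_vector set \<Rightarrow> ('a \<Rightarrow> real) \<Rightarrow> ('a \<Rightarrow> real) \<Rightarrow> real" where
  "fnorm X N g = Inf {K. 0 \<le> K \<and> (\<forall>x\<in>X. \<bar>g x\<bar> \<le> K * N x)}"

(* Dual of the Frechet space X_F = \<Inter> X_s *)
definition frechet_dual :: "(nat \<Rightarrow> 'a::real_vector set) \<Rightarrow> (nat \<Rightarrow> 'a \<Rightarrow> real) \<Rightarrow> ('a \<Rightarrow> real) set" where
  "frechet_dual X N = {g. (\<forall>x\<in>(\<Inter>r. X r). \<forall>y\<in>(\<Inter>r. X r). g (x + y) = g x + g y)
      \<and> (\<forall>x\<in>(\<Inter>r. X r). \<forall>c. g (c *\<^sub>R x) = c * g x)
      \<and> (\<exists>s K. \<forall>x\<in>(\<Inter>r. X r). \<bar>g x\<bar> \<le> K * N s x)}"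

definition reflexive_on :: "'a::real_vector set \<Rightarrow> ('a \<Rightarrow> real) \<Rightarrow> bool" where
  "reflexive_on X N \<longleftrightarrow> (\<forall>\<phi>.
       ((\<forall>h1\<in>dual_set X N. \<forall>h2\<in>dual_set X N. \<phi> (\<lambda>x. h1 x + h2 x) = \<phi> h1 + \<phi> h2)
        \<and> (\<forall>h\<in>dual_set X N. \<forall>c. \<phi> (\<lambda>x. c * h x) = c * \<phi> h)
        \<and> (\<exists>K. \<forall>h\<in>dual_set X N. \<bar>\<phi> h\<bar> \<le> K * fnorm X N h)) \<longrightarrow>
       (\<exists>x\<in>X. \<forall>h\<in>dual_set X N. \<phi> h = h x))"

(* Sequence spaces (indices start at 0) *)
definition e_vec :: "nat \<Rightarrow> nat \<Rightarrow> real" where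
  "e_vec i = (\<lambda>j. if j = i then 1 else 0)"

definition BK_space :: "(nat \<Rightarrow> real) set \<Rightarrow> ((nat \<Rightarrow> real) \<Rightarrow> real) \<Rightarrow> bool" where
  "BK_space \<Theta> T \<longleftrightarrow> banach_on \<Theta> T \<and> (\<forall>i. \<exists>C. \<forall>c\<in>\<Theta>. \<bar>c i\<bar> \<le> C * T c)"

definition lambda_BK :: "(nat \<Rightarrow> real) set \<Rightarrow> ((nat \<Rightarrow> real) \<Rightarrow> real) \<Rightarrow> real \<Rightarrow> bool" where
  "lambda_BK \<Theta> T l \<longleftrightarrow> BK_space \<Theta> T \<and> (\<forall>i. e_vec i \<in> \<Theta>)
     \<and> (\<forall>c\<in>\<Theta>. \<forall>n. T (\<Sum>i<n. c i *\<^sub>R e_vec i) \<le> l * T c)"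

definition CB_space :: "(nat \<Rightarrow> real) set \<Rightarrow> ((nat \<Rightarrow> real) \<Rightarrow> real) \<Rightarrow> bool" where
  "CB_space \<Theta> T \<longleftrightarrow> BK_space \<Theta> T \<and> (\<forall>i. e_vec i \<in> \<Theta>)
     \<and> (\<forall>c\<in>\<Theta>. (\<lambda>n. T (c - (\<Sum>i<n. c i *\<^sub>R e_vec i))) \<longlonglongrightarrow> 0)"

(* The dual \<Theta>^* identified with the sequence space {g(e_i)} normed by \<parallel>g\<parallel> *)
definition seq_dual :: "(nat \<Rightarrow> real) set \<Rightarrow> ((nat \<Rightarrow> real) \<Rightarrow> real) \<Rightarrow> (nat \<Rightarrow> real) set" where
  "seq_dual \<Theta> T = {c. \<exists>g\<in>dual_set \<Theta> T. \<forall>i. c i = g (e_vec i)}"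

definition seq_dual_norm :: "(nat \<Rightarrow> real) set \<Rightarrow> ((nat \<Rightarrow> real) \<Rightarrow> real) \<Rightarrow> (nat \<Rightarrow> real) \<Rightarrow> real" where
  "seq_dual_norm \<Theta> T c = fnorm \<Theta> T (SOME g. g \<in> dual_set \<Theta> T \<and> (\<forall>i. c i = g (e_vec i)))"

definition theta_frame :: "'a::real_vector set \<Rightarrow> ('a \<Rightarrow> real) \<Rightarrow> (nat \<Rightarrow> real) set
     \<Rightarrow> ((nat \<Rightarrow> real) \<Rightarrow> real) \<Rightarrow> (nat \<Rightarrow> 'a \<Rightarrow> real) \<Rightarrow> bool" where
  "theta_frame X N \<Theta> T g \<longleftrightarrow> (\<forall>i. g i \<in> dual_set X N) \<and> (\<forall>f\<in>X. (\<lambda>i. g i f) \<in> \<Theta>)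
     \<and> (\<exists>A B. 0 < A \<and> (\<forall>f\<in>X. A * N f \<le> T (\<lambda>i. g i f) \<and> T (\<lambda>i. g i f) \<le> B * N f))"

definition bounded_op :: "(nat \<Rightarrow> real) set \<Rightarrow> ((nat \<Rightarrow> real) \<Rightarrow> real)
     \<Rightarrow> 'a::real_vector set \<Rightarrow> ('a \<Rightarrow> real) \<Rightarrow> ((nat \<Rightarrow> real) \<Rightarrow> 'a) \<Rightarrow> bool" where
  "bounded_op \<Theta> T X N V \<longleftrightarrow> (\<forall>c\<in>\<Theta>. V c \<in> X)
     \<and> (\<forall>c\<in>\<Theta>. \<forall>d\<in>\<Theta>. V (c + d) = V c + V d) \<and> (\<forall>c\<in>\<Theta>. \<forall>a. V (a *\<^sub>R c) = a *\<^sub>R V c)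
     \<and> (\<exists>K. \<forall>c\<in>\<Theta>. N (V c) \<le> K * T c)"

definition banach_frame :: "'a::real_vector set \<Rightarrow> ('a \<Rightarrow> real) \<Rightarrow> (nat \<Rightarrow> real) set
     \<Rightarrow> ((nat \<Rightarrow> real) \<Rightarrow> real) \<Rightarrow> (nat \<Rightarrow> 'a \<Rightarrow> real) \<Rightarrow> bool" where
  "banach_frame X N \<Theta> T g \<longleftrightarrow> theta_frame X N \<Theta> T g
     \<and> (\<exists>V. bounded_op \<Theta> T X N V \<and> (\<forall>f\<in>X. V (\<lambda>i. g i f) = f))"

(* Sequences {f_i} \<subseteq> X viewed as acting on X^* via h \<mapsto> {h(f_i)} *)
definition dual_bessel :: "'a::real_vector set \<Rightarrow> ('a \<Rightarrow> real) \<Rightarrow> (nat \<Rightarrow> real) set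
     \<Rightarrow> ((nat \<Rightarrow> real) \<Rightarrow> real) \<Rightarrow> (nat \<Rightarrow> 'a) \<Rightarrow> bool" where
  "dual_bessel X N \<Theta> T f \<longleftrightarrow> (\<forall>i. f i \<in> X) \<and> (\<forall>h\<in>dual_set X N. (\<lambda>i. h (f i)) \<in> \<Theta>)
     \<and> (\<exists>B. \<forall>h\<in>dual_set X N. T (\<lambda>i. h (f i)) \<le> B * fnorm X N h)"

definition dual_frame :: "'a::real_vector set \<Rightarrow> ('a \<Rightarrow> real) \<Rightarrow> (nat \<Rightarrow> real) set
     \<Rightarrow> ((nat \<Rightarrow> real) \<Rightarrow> real) \<Rightarrow> (nat \<Rightarrow> 'a) \<Rightarrow> bool" where
  "dual_frame X N \<Theta> T f \<longleftrightarrow> (\<forall>i. f i \<in> X) \<and> (\<forall>h\<in>dual_set X N. (\<lambda>i. h (f i)) \<in> \<Theta>)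
     \<and> (\<exists>A B. 0 < A \<and> (\<forall>h\<in>dual_set X N. A * fnorm X N h \<le> T (\<lambda>i. h (f i))
                                         \<and> T (\<lambda>i. h (f i)) \<le> B * fnorm X N h))"

(* Banach frame for X^* w.r.t. \<Theta>; functionals are identified when they agree on X *)
definition dual_banach_frame :: "'a::real_vector set \<Rightarrow> ('a \<Rightarrow> real) \<Rightarrow> (nat \<Rightarrow> real) set
     \<Rightarrow> ((nat \<Rightarrow> real) \<Rightarrow> real) \<Rightarrow> (nat \<Rightarrow> 'a) \<Rightarrow> bool" where
  "dual_banach_frame X N \<Theta> T f \<longleftrightarrow> dual_frame X N \<Theta> T f
     \<and> (\<exists>V. (\<forall>c\<in>\<Theta>. V c \<in> dual_set X N)
          \<and> (\<forall>c\<in>\<Theta>. \<forall>d\<in>\<Theta>. \<forall>x\<in>X. V (c + d) x = V c x + V d x)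
          \<and> (\<forall>c\<in>\<Theta>. \<forall>a. \<forall>x\<in>X. V (a *\<^sub>R c) x = a * V c x)
          \<and> (\<exists>K. \<forall>c\<in>\<Theta>. fnorm X N (V c) \<le> K * T c)
          \<and> (\<forall>h\<in>dual_set X N. \<forall>x\<in>X. V (\<lambda>i. h (f i)) x = h x))"

definition pre_F_frame :: "(nat \<Rightarrow> 'a::real_vector set) \<Rightarrow> (nat \<Rightarrow> 'a \<Rightarrow> real)
     \<Rightarrow> (nat \<Rightarrow> (nat \<Rightarrow> real) set) \<Rightarrow> (nat \<Rightarrow> (nat \<Rightarrow> real) \<Rightarrow> real) \<Rightarrow> (nat \<Rightarrow> 'a \<Rightarrow> real) \<Rightarrow> bool" where
  "pre_F_frame X N \<Theta> T g \<longleftrightarrow> (\<forall>i. g i \<in> frechet_dual X N)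
     \<and> (\<forall>f\<in>(\<Inter>r. X r). (\<lambda>i. g i f) \<in> (\<Inter>r. \<Theta> r))
     \<and> (\<forall>s. \<exists>A B. 0 < A \<and> A \<le> B \<and> (\<forall>f\<in>(\<Inter>r. X r).
            A * N s f \<le> T s (\<lambda>i. g i f) \<and> T s (\<lambda>i. g i f) \<le> B * N s f))"

definition F_frame :: "(nat \<Rightarrow> 'a::real_vector set) \<Rightarrow> (nat \<Rightarrow> 'a \<Rightarrow> real)
     \<Rightarrow> (nat \<Rightarrow> (nat \<Rightarrow> real) set) \<Rightarrow> (nat \<Rightarrow> (nat \<Rightarrow> real) \<Rightarrow> real) \<Rightarrow> (nat \<Rightarrow> 'a \<Rightarrow> real) \<Rightarrow> bool" where
  "F_frame X N \<Theta> T g \<longleftrightarrow> pre_F_frame X N \<Theta> T g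
     \<and> (\<exists>V. (\<forall>c\<in>(\<Inter>r. \<Theta> r). V c \<in> (\<Inter>r. X r))
          \<and> (\<forall>c\<in>(\<Inter>r. \<Theta> r). \<forall>d\<in>(\<Inter>r. \<Theta> r). V (c + d) = V c + V d)
          \<and> (\<forall>c\<in>(\<Inter>r. \<Theta> r). \<forall>a. V (a *\<^sub>R c) = a *\<^sub>R V c)
          \<and> (\<forall>s. \<exists>K. \<forall>c\<in>(\<Inter>r. \<Theta> r). N s (V c) \<le> K * T s c)
          \<and> (\<forall>f\<in>(\<Inter>r. X r). V (\<lambda>i. g i f) = f))"

(* g_i^s: the (unique) continuous extension of g_i from X_F to X_s *)
definition F_ext :: "(nat \<Rightarrow> 'a::real_vector set) \<Rightarrow> (nat \<Rightarrow> 'a \<Rightarrow> real) \<Rightarrow> (nat \<Rightarrow> 'a \<Rightarrow> real)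
     \<Rightarrow> nat \<Rightarrow> nat \<Rightarrow> 'a \<Rightarrow> real" where
  "F_ext X N g s i = (SOME h. h \<in> dual_set (X s) (N s) \<and> (\<forall>x\<in>(\<Inter>r. X r). h x = g i x))"

definition DF_bessel :: "(nat \<Rightarrow> 'a::real_vector set) \<Rightarrow> (nat \<Rightarrow> 'a \<Rightarrow> real)
     \<Rightarrow> (nat \<Rightarrow> (nat \<Rightarrow> real) set) \<Rightarrow> (nat \<Rightarrow> (nat \<Rightarrow> real) \<Rightarrow> real) \<Rightarrow> (nat \<Rightarrow> 'a) \<Rightarrow> bool" where
  "DF_bessel X N \<Theta> T f \<longleftrightarrow> (\<forall>s. dual_bessel (X s) (N s) (seq_dual (\<Theta> s) (T s)) (seq_dual_norm (\<Theta> s) (T s)) f)"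

definition pre_DF_frame :: "(nat \<Rightarrow> 'a::real_vector set) \<Rightarrow> (nat \<Rightarrow> 'a \<Rightarrow> real)
     \<Rightarrow> (nat \<Rightarrow> (nat \<Rightarrow> real) set) \<Rightarrow> (nat \<Rightarrow> (nat \<Rightarrow> real) \<Rightarrow> real) \<Rightarrow> (nat \<Rightarrow> 'a) \<Rightarrow> bool" where
  "pre_DF_frame X N \<Theta> T f \<longleftrightarrow> (\<forall>s. dual_frame (X s) (N s) (seq_dual (\<Theta> s) (T s)) (seq_dual_norm (\<Theta> s) (T s)) f)"

definition DF_frame :: "(nat \<Rightarrow> 'a::real_vector set) \<Rightarrow> (nat \<Rightarrow> 'a \<Rightarrow> real)
     \<Rightarrow> (nat \<Rightarrow> (nat \<Rightarrow> real) set) \<Rightarrow> (nat \<Rightarrow> (nat \<Rightarrow> real) \<Rightarrow> real) \<Rightarrow> (nat \<Rightarrow> 'a) \<Rightarrow> bool" where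
  "DF_frame X N \<Theta> T f \<longleftrightarrow> (\<forall>s. dual_banach_frame (X s) (N s) (seq_dual (\<Theta> s) (T s)) (seq_dual_norm (\<Theta> s) (T s)) f)"

definition exp_XF :: "(nat \<Rightarrow> 'a::real_vector set) \<Rightarrow> (nat \<Rightarrow> 'a \<Rightarrow> real) \<Rightarrow> (nat \<Rightarrow> 'a \<Rightarrow> real) \<Rightarrow> (nat \<Rightarrow> 'a) \<Rightarrow> bool" where
  "exp_XF X N g f \<longleftrightarrow> (\<forall>x\<in>(\<Inter>r. X r). \<forall>s. (\<lambda>n. N s (x - (\<Sum>i<n. g i x *\<^sub>R f i))) \<longlonglongrightarrow> 0)"

(* convergence in X_F^* : weak-* (pointwise on X_F) *)
definition exp_XF_dual :: "(nat \<Rightarrow> 'a::real_vector set) \<Rightarrow> (nat \<Rightarrow> 'a \<Rightarrow> real) \<Rightarrow> (nat \<Rightarrow> 'a \<Rightarrow> real) \<Rightarrow> (nat \<Rightarrow> 'a) \<Rightarrow> bool" where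
  "exp_XF_dual X N g f \<longleftrightarrow> (\<forall>h\<in>frechet_dual X N. \<forall>x\<in>(\<Inter>r. X r).
       (\<lambda>n. \<Sum>i<n. h (f i) * g i x) \<longlonglongrightarrow> h x)"

definition exp_Xs :: "(nat \<Rightarrow> 'a::real_vector set) \<Rightarrow> (nat \<Rightarrow> 'a \<Rightarrow> real) \<Rightarrow> (nat \<Rightarrow> 'a \<Rightarrow> real) \<Rightarrow> (nat \<Rightarrow> 'a) \<Rightarrow> bool" where
  "exp_Xs X N g f \<longleftrightarrow> (\<forall>s. \<forall>x\<in>X s. (\<lambda>n. N s (x - (\<Sum>i<n. F_ext X N g s i x *\<^sub>R f i))) \<longlonglongrightarrow> 0)"

definition exp_Xs_dual :: "(nat \<Rightarrow> 'a::real_vector set) \<Rightarrow> (nat \<Rightarrow> 'a \<Rightarrow> real) \<Rightarrow> (nat \<Rightarrow> 'a \<Rightarrow> real) \<Rightarrow> (nat \<Rightarrow> 'a) \<Rightarrow> bool" where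
  "exp_Xs_dual X N g f \<longleftrightarrow> (\<forall>s. \<forall>h\<in>dual_set (X s) (N s).
       (\<lambda>n. fnorm (X s) (N s) (\<lambda>x. h x - (\<Sum>i<n. h (f i) * F_ext X N g s i x))) \<longlonglongrightarrow> 0)"

end

theory Submission
  imports Defs
begin

lemma isn_facts:
  assumes "is_norm_on X N"
  shows "0 \<in> X" "\<And>x y. x\<in>X \<Longrightarrow> y\<in>X \<Longrightarrow> x + y \<in> X" "\<And>x c. x\<in>X \<Longrightarrow> c *\<^sub>R x \<in> X"
    "\<And>x. x\<in>X \<Longrightarrow> 0 \<le> N x" "\<And>x. x\<in>X \<Longrightarrow> N x = 0 \<longleftrightarrow> x = 0"
    "\<And>x c. x\<in>X \<Longrightarrow> N (c *\<^sub>R x) = \<bar>c\<bar> * N x"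
    "\<And>x y. x\<in>X \<Longrightarrow> y\<in>X \<Longrightarrow> N (x + y) \<le> N x + N y"
  using assms unfolding is_norm_on_def by auto

lemma isn_minus:
  assumes "is_norm_on X N" "x \<in> X" "y \<in> X"
  shows "x - y \<in> X" "-x \<in> X"
proof -
  have "x - y = x + (-1) *\<^sub>R y" by simp
  thus "x - y \<in> X" using isn_facts[OF assms(1)] assms by metis
  have "-x = (-1) *\<^sub>R x" by simp
  thus "-x \<in> X" using isn_facts[OF assms(1)] assms by metis
qed

lemma isn_N0: "is_norm_on X N \<Longrightarrow> N 0 = 0"
  using isn_facts(1,5) by blast

lemma isn_neg: assumes "is_norm_on X N" "x \<in> X" shows "N (-x) = N x"
proof -
  have "-x = (-1) *\<^sub>R x" by simp
  thus ?thesis using isn_facts(6)[OF assms(1,2), of "-1"] by simp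
qed

lemma isn_commute: assumes "is_norm_on X N" "x \<in> X" "y \<in> X" shows "N (x - y) = N (y - x)"
  using isn_neg[OF assms(1) isn_minus(1)[OF assms]] by simp

lemma isn_tri: assumes "is_norm_on X N" "x \<in> X" "y \<in> X" "z \<in> X"
  shows "N (x - z) \<le> N (x - y) + N (y - z)"
proof -
  have "x - z = (x - y) + (y - z)" by simp
  thus ?thesis using isn_facts(7)[OF assms(1) isn_minus(1)[OF assms(1,2,3)] isn_minus(1)[OF assms(1,3,4)]]
    by simp
qed

lemma isn_tri_plus: assumes "is_norm_on X N" "x \<in> X" "y \<in> X" "x' \<in> X" "y' \<in> X"
  shows "N ((x + y) - (x' + y')) \<le> N (x - x') + N (y - y')"
proof -
  have eq: "(x + y) - (x' + y') = (x - x') + (y - y')" by simp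
  show ?thesis unfolding eq using isn_facts(7)[OF assms(1) isn_minus(1)[OF assms(1,2,4)] isn_minus(1)[OF assms(1,3,5)]]
    by simp
qed

lemma isn_tri_diff: assumes "is_norm_on X N" "x \<in> X" "y \<in> X" shows "N (x - y) \<le> N x + N y"
proof -
  have "N (x + (-y)) \<le> N x + N (-y)" using isn_facts(7)[OF assms(1,2) isn_minus(2)[OF assms(1,3,3)]] .
  thus ?thesis using isn_neg[OF assms(1,3)] by simp
qed

lemma isn_rev: assumes "is_norm_on X N" "x \<in> X" "y \<in> X"
  shows "\<bar>N x - N y\<bar> \<le> N (x - y)"
proof -
  have 1: "N x \<le> N (x - y) + N y" using isn_tri[OF assms(1) assms(2) _ isn_facts(1)[OF assms(1)], of y]
      assms isn_N0[OF assms(1)] by simp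
  have 2: "N y \<le> N (y - x) + N x" using isn_tri[OF assms(1) assms(3) _ isn_facts(1)[OF assms(1)], of x]
      assms isn_N0[OF assms(1)] by simp
  show ?thesis using 1 2 isn_commute[OF assms] by linarith
qed

lemma isn_sum: assumes "is_norm_on X N" "\<And>i. i < (n::nat) \<Longrightarrow> v i \<in> X"
  shows "(\<Sum>i<n. c i *\<^sub>R v i) \<in> X"
  using assms(2)
proof (induction n)
  case 0 then show ?case using isn_facts(1)[OF assms(1)] by simp
next
  case (Suc n) then show ?case using isn_facts(2,3)[OF assms(1)] by simp
qed

lemma isn_sum_N: assumes "is_norm_on X N" "\<And>i. i < (n::nat) \<Longrightarrow> v i \<in> X"
  shows "N (\<Sum>i<n. v i) \<le> (\<Sum>i<n. N (v i))"
  using assms(2)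
proof (induction n)
  case 0 then show ?case using isn_N0[OF assms(1)] by simp
next
  case (Suc n)
  have "(\<Sum>i<n. v i) \<in> X" using isn_sum[OF assms(1), of n v "\<lambda>_. 1"] Suc.prems by simp
  then show ?case using isn_facts(7)[OF assms(1), of "\<Sum>i<n. v i" "v n"] Suc by simp
qed

definition lin_on :: "'a::real_vector set \<Rightarrow> ('a \<Rightarrow> 'b::real_vector) \<Rightarrow> bool" where
  "lin_on X L \<longleftrightarrow> (\<forall>x\<in>X. \<forall>y\<in>X. L (x + y) = L x + L y) \<and> (\<forall>x\<in>X. \<forall>c. L (c *\<^sub>R x) = c *\<^sub>R L x)"

lemma lin_add: "lin_on X L \<Longrightarrow> x\<in>X \<Longrightarrow> y\<in>X \<Longrightarrow> L (x + y) = L x + L y"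
  unfolding lin_on_def by auto
lemma lin_scale: "lin_on X L \<Longrightarrow> x\<in>X \<Longrightarrow> L (c *\<^sub>R x) = c *\<^sub>R L x"
  unfolding lin_on_def by auto
lemma lin_zero: "lin_on X L \<Longrightarrow> is_norm_on X N \<Longrightarrow> L 0 = 0"
  using lin_scale[of X L 0 0] isn_facts(1) by fastforce
lemma lin_diff: assumes "lin_on X L" "is_norm_on X N" "x\<in>X" "y\<in>X" shows "L (x - y) = L x - L y"
proof -
  have "x - y = x + (-1) *\<^sub>R y" by simp
  thus ?thesis using lin_add[OF assms(1,3) isn_facts(3)[OF assms(2,4), of "-1"]] lin_scale[OF assms(1,4), of "-1"]
    by simp
qed
lemma lin_sum: assumes "lin_on X L" "is_norm_on X N" "\<And>i. i < (n::nat) \<Longrightarrow> v i \<in> X"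
  shows "L (\<Sum>i<n. c i *\<^sub>R v i) = (\<Sum>i<n. c i *\<^sub>R L (v i))"
  using assms(3)
proof (induction n)
  case 0 then show ?case using lin_zero[OF assms(1,2)] by simp
next
  case (Suc n)
  have "(\<Sum>i<n. c i *\<^sub>R v i) \<in> X" using isn_sum[OF assms(2), of n v c] Suc.prems by simp
  then show ?case using Suc lin_add[OF assms(1)] lin_scale[OF assms(1)] isn_facts(3)[OF assms(2)] by simp
qed

lemma dual_lin: "g \<in> dual_set X N \<Longrightarrow> lin_on X g"
  unfolding dual_set_def bounded_functional_on_def lin_on_def by auto

lemma dual_bound: "g \<in> dual_set X N \<Longrightarrow> \<exists>K\<ge>0. \<forall>x\<in>X. \<bar>g x\<bar> \<le> K * N x" if "is_norm_on X N"
proof -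
  assume "g \<in> dual_set X N"
  then obtain K where K: "\<forall>x\<in>X. \<bar>g x\<bar> \<le> K * N x" unfolding dual_set_def bounded_functional_on_def by auto
  have "\<forall>x\<in>X. \<bar>g x\<bar> \<le> max K 0 * N x"
  proof
    fix x assume "x\<in>X"
    then have "0 \<le> N x" using isn_facts(4)[OF that] by auto
    then have "K * N x \<le> max K 0 * N x" by (simp add: mult_right_mono)
    thus "\<bar>g x\<bar> \<le> max K 0 * N x" using K \<open>x\<in>X\<close> by force
  qed
  thus ?thesis by (intro exI[of _ "max K 0"]) auto
qed

lemma dual_setI:
  assumes "lin_on X g" "\<forall>x\<in>X. \<bar>g x\<bar> \<le> K * N x"
  shows "g \<in> dual_set X N"
  using assms unfolding dual_set_def bounded_functional_on_def lin_on_def by auto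

lemma fnorm_le:
  assumes "is_norm_on X N" "0 \<le> K" "\<forall>x\<in>X. \<bar>g x\<bar> \<le> K * N x"
  shows "fnorm X N g \<le> K"
  unfolding fnorm_def by (rule cInf_lower) (use assms in \<open>auto intro!: bdd_belowI[of _ 0]\<close>)

lemma fnorm_nonneg:
  assumes "is_norm_on X N" "g \<in> dual_set X N"
  shows "0 \<le> fnorm X N g"
proof -
  obtain K where "K \<ge> 0" "\<forall>x\<in>X. \<bar>g x\<bar> \<le> K * N x" using dual_bound[OF assms(1,2)] by auto
  thus ?thesis unfolding fnorm_def by (intro cInf_greatest) auto
qed

lemma fnorm_bound:
  assumes "is_norm_on X N" "g \<in> dual_set X N" "x \<in> X"
  shows "\<bar>g x\<bar> \<le> fnorm X N g * N x"
proof (cases "x = 0")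
  case True
  then show ?thesis using lin_zero[OF dual_lin[OF assms(2)] assms(1)] isn_N0[OF assms(1)] by simp
next
  case False
  then have pos: "N x > 0" using isn_facts(4,5)[OF assms(1) assms(3)] by force
  obtain K where "K \<ge> 0" "\<forall>x\<in>X. \<bar>g x\<bar> \<le> K * N x" using dual_bound[OF assms(1,2)] by auto
  then have ne: "{K. 0 \<le> K \<and> (\<forall>x\<in>X. \<bar>g x\<bar> \<le> K * N x)} \<noteq> {}" by auto
  have "\<bar>g x\<bar> / N x \<le> fnorm X N g" unfolding fnorm_def
  proof (rule cInf_greatest[OF ne])
    fix K assume "K \<in> {K. 0 \<le> K \<and> (\<forall>x\<in>X. \<bar>g x\<bar> \<le> K * N x)}"
    then have "\<bar>g x\<bar> \<le> K * N x" using assms(3) by auto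
    thus "\<bar>g x\<bar> / N x \<le> K" using pos by (simp add: divide_le_eq)
  qed
  thus ?thesis using pos by (simp add: divide_le_eq)
qed

lemma fnorm_cong:
  assumes "\<forall>x\<in>X. g x = h x"
  shows "fnorm X N g = fnorm X N h"
  unfolding fnorm_def using assms by simp

lemma agree_dense:
  assumes X: "is_norm_on X N" and Y: "is_norm_on Y M" and D: "dense_in X N D"
    and L1: "lin_on X L1" "\<forall>x\<in>X. L1 x \<in> Y" "\<forall>x\<in>X. M (L1 x) \<le> K1 * N x"
    and L2: "lin_on X L2" "\<forall>x\<in>X. L2 x \<in> Y" "\<forall>x\<in>X. M (L2 x) \<le> K2 * N x"
    and eq: "\<forall>d\<in>D. L1 d = L2 d" and x: "x \<in> X"
  shows "L1 x = L2 x"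
proof -
  let ?K = "\<bar>K1\<bar> + \<bar>K2\<bar> + 1"
  have Kpos: "?K > 0" by simp
  have "M (L1 x - L2 x) \<le> e" if e: "e > 0" for e
  proof -
    have eK: "e / ?K > 0" using e Kpos by simp
    obtain d where d: "d \<in> D" "N (x - d) < e / ?K" using D x eK unfolding dense_in_def by blast
    have dX: "d \<in> X" using d D unfolding dense_in_def by auto
    have xd: "x - d \<in> X" using isn_minus[OF X x dX] by simp
    have n0: "0 \<le> N (x - d)" using isn_facts(4)[OF X xd] .
    have "L1 x - L2 x = L1 (x - d) - L2 (x - d)"
      using lin_diff[OF L1(1) X x dX] lin_diff[OF L2(1) X x dX] eq d(1) by simp
    also have "M \<dots> \<le> M (L1 (x - d)) + M (L2 (x - d))"
      using isn_tri_diff[OF Y L1(2)[rule_format, OF xd] L2(2)[rule_format, OF xd]] by simp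
    also have "\<dots> \<le> K1 * N (x - d) + K2 * N (x - d)"
    proof -
      have "M (L1 (x - d)) \<le> K1 * N (x - d)" using L1(3) xd by blast
      moreover have "M (L2 (x - d)) \<le> K2 * N (x - d)" using L2(3) xd by blast
      ultimately show ?thesis by (rule add_mono)
    qed
    also have "\<dots> \<le> ?K * N (x - d)"
    proof -
      have a: "K1 * N (x - d) \<le> \<bar>K1\<bar> * N (x - d)" by (rule mult_right_mono) (simp_all add: n0)
      have b: "K2 * N (x - d) \<le> \<bar>K2\<bar> * N (x - d)" by (rule mult_right_mono) (simp_all add: n0)
      have c: "?K * N (x - d) = \<bar>K1\<bar> * N (x - d) + \<bar>K2\<bar> * N (x - d) + N (x - d)" by (simp add: algebra_simps)
      show ?thesis using a b n0 c by linarith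
    qed
    also have "\<dots> \<le> e"
    proof -
      have "N (x - d) * ?K < e" using d(2) pos_less_divide_eq[OF Kpos] by blast
      moreover have "?K * N (x - d) = N (x - d) * ?K" by (rule mult.commute)
      ultimately show ?thesis by linarith
    qed
    finally show ?thesis .
  qed
  then have "M (L1 x - L2 x) \<le> 0" by (rule field_le_epsilon) simp
  then have "M (L1 x - L2 x) = 0" using isn_facts(4)[OF Y isn_minus(1)[OF Y L1(2)[rule_format, OF x] L2(2)[rule_format, OF x]]] by simp
  thus ?thesis using isn_facts(5)[OF Y isn_minus(1)[OF Y L1(2)[rule_format, OF x] L2(2)[rule_format, OF x]]] by simp
qed


lemma le_lim0: assumes "\<And>n. a \<le> f n" "f \<longlonglongrightarrow> 0" shows "(a::real) \<le> 0"
  using LIMSEQ_le_const[OF assms(2)] assms(1) by blast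

lemma lim0_cmp: assumes "\<And>n. 0 \<le> f n" "\<And>n. f n \<le> g n" "g \<longlonglongrightarrow> 0" shows "(f::nat\<Rightarrow>real) \<longlonglongrightarrow> 0"
  by (rule Lim_null_comparison[OF _ assms(3)]) (use assms in auto)

lemma isn_sub:
  assumes "is_norm_on X N" "D \<subseteq> X" "D \<noteq> {}" "\<forall>x\<in>D. \<forall>y\<in>D. x+y \<in> D" "\<forall>x\<in>D. \<forall>c. c *\<^sub>R x \<in> D"
  shows "is_norm_on D N"
proof -
  obtain d where "d \<in> D" using assms(3) by auto
  then have "0 \<in> D" using assms(5) by (metis scaleR_zero_left)
  thus ?thesis using assms(1,2,4,5) unfolding is_norm_on_def subset_iff by auto
qed

lemma lim_uniq:
  assumes Y: "is_norm_on Y M" and "\<And>n. u n \<in> Y" "a \<in> Y" "b \<in> Y"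
    "(\<lambda>n. M (u n - a)) \<longlonglongrightarrow> 0" "(\<lambda>n. M (u n - b)) \<longlonglongrightarrow> 0"
  shows "a = b"
proof -
  have "M (a - b) \<le> M (u n - a) + M (u n - b)" for n
    using isn_tri[OF Y assms(3) assms(2) assms(4)] isn_commute[OF Y assms(3) assms(2)] by simp
  then have "M (a - b) - 0 \<le> 0"
    using le_lim0[of "M (a - b)" "\<lambda>n. M (u n - a) + M (u n - b)"] tendsto_add[OF assms(5,6)] by simp
  moreover have "0 \<le> M (a - b)" using isn_facts(4)[OF Y isn_minus(1)[OF Y assms(3,4)]] .
  ultimately have "M (a - b) = 0" by simp
  thus ?thesis using isn_facts(5)[OF Y isn_minus(1)[OF Y assms(3,4)]] by simp
qed

lemma approx_seq:
  assumes "dense_in X N D" "x \<in> X" and X: "is_norm_on X N"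
  shows "\<exists>s. (\<forall>n. s n \<in> D) \<and> (\<lambda>n. N (x - s n)) \<longlonglongrightarrow> 0"
proof -
  have "\<forall>n. \<exists>d. d \<in> D \<and> N (x - d) < inverse (real (Suc n))"
    using assms unfolding dense_in_def by (metis inverse_positive_iff_positive of_nat_0_less_iff zero_less_Suc)
  then obtain s where s: "\<And>n. s n \<in> D \<and> N (x - s n) < inverse (real (Suc n))" by metis
  have D: "D \<subseteq> X" using assms unfolding dense_in_def by auto
  show ?thesis
  proof (intro exI conjI allI)
    show "s n \<in> D" for n using s by auto
    show "(\<lambda>n. N (x - s n)) \<longlonglongrightarrow> 0"
    proof (rule Lim_null_comparison[OF _ LIMSEQ_inverse_real_of_nat])
      show "eventually (\<lambda>n. norm (N (x - s n)) \<le> inverse (real (Suc n))) sequentially"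
      proof (rule always_eventually, rule allI)
        fix n
        have "s n \<in> X" using s D by auto
        then have "0 \<le> N (x - s n)" using isn_facts(4)[OF X isn_minus(1)[OF X assms(2)]] by blast
        thus "norm (N (x - s n)) \<le> inverse (real (Suc n))" using s[of n] by simp
      qed
    qed
  qed
qed

context
  fixes X :: "'a::real_vector set" and N and Y :: "'b::real_vector set" and M and D and L and K
  assumes X: "is_norm_on X N" and Yb: "banach_on Y M" and D: "dense_in X N D"
    and Dadd: "\<forall>x\<in>D. \<forall>y\<in>D. x + y \<in> D" and Dsc: "\<forall>x\<in>D. \<forall>c. c *\<^sub>R x \<in> D"
    and Llin: "lin_on D L" and LY: "\<forall>d\<in>D. L d \<in> Y" and LK: "\<forall>d\<in>D. M (L d) \<le> K * N d" and K0: "0 \<le> K"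
begin

private lemma Y: "is_norm_on Y M" using Yb unfolding banach_on_def by auto
private lemma DX: "D \<subseteq> X" using D unfolding dense_in_def by auto
private lemma DN: "is_norm_on D N"
proof -
  obtain d where "d \<in> D" using D isn_facts(1)[OF X] unfolding dense_in_def
    by (metis zero_less_one)
  thus ?thesis using isn_sub[OF X DX _ Dadd Dsc] by auto
qed

private lemma Ldiff: assumes "d1 \<in> D" "d2 \<in> D" shows "M (L d1 - L d2) \<le> K * N (d1 - d2)"
proof -
  have "M (L (d1 - d2)) \<le> K * N (d1 - d2)" using LK isn_minus(1)[OF DN assms] by blast
  thus ?thesis using lin_diff[OF Llin DN assms] by simp
qed

private lemma close:
  assumes "x \<in> X" "a \<in> D" "b \<in> D"
  shows "M (L a - L b) \<le> K * (N (x - a) + N (x - b))"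
proof -
  have sX: "a \<in> X" and tX: "b \<in> X" using assms DX by auto
  have "N (a - b) \<le> N (a - x) + N (x - b)" using isn_tri[OF X sX assms(1) tX] .
  also have "N (a - x) = N (x - a)" using isn_commute[OF X sX assms(1)] .
  finally have "K * N (a - b) \<le> K * (N (x - a) + N (x - b))" using K0 by (simp add: mult_left_mono)
  thus ?thesis using Ldiff[OF assms(2,3)] by linarith
qed

private lemma cauchy_lim:
  assumes x: "x \<in> X" and s: "\<And>n. s n \<in> D" and lim: "(\<lambda>n. N (x - s n)) \<longlonglongrightarrow> 0"
  shows "\<exists>y\<in>Y. (\<lambda>n. M (L (s n) - y)) \<longlonglongrightarrow> 0"
proof -
  have "\<forall>e>0. \<exists>M0. \<forall>m\<ge>M0. \<forall>n\<ge>M0. M (L (s m) - L (s n)) < e"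
  proof (intro allI impI)
    fix e :: real assume e: "e > 0"
    define e' where "e' = e / (2 * (K + 1))"
    have e': "e' > 0" using e K0 by (simp add: e'_def)
    obtain M0 where M0: "\<And>n. n \<ge> M0 \<Longrightarrow> N (x - s n) < e'"
      using order_tendstoD(2)[OF lim e'] unfolding eventually_sequentially by auto
    have "M (L (s m) - L (s n)) < e" if "m \<ge> M0" "n \<ge> M0" for m n
    proof -
      have a: "N (x - s m) + N (x - s n) < 2 * e'" using M0[OF that(1)] M0[OF that(2)] by simp
      have nn: "0 \<le> N (x - s m) + N (x - s n)"
        using isn_facts(4)[OF X isn_minus(1)[OF X x]] s DX by (auto simp: subset_iff intro!: add_nonneg_nonneg)
      have "M (L (s m) - L (s n)) \<le> K * (N (x - s m) + N (x - s n))" using close[OF x s[of m] s[of n]] .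
      also have "\<dots> \<le> (K + 1) * (N (x - s m) + N (x - s n))"
        using nn by (simp add: distrib_right)
      also have "\<dots> < (K + 1) * (2 * e')" using a K0 by (intro mult_strict_left_mono) auto
      also have "\<dots> = e" using K0 by (simp add: e'_def field_simps)
      finally show ?thesis .
    qed
    thus "\<exists>M0. \<forall>m\<ge>M0. \<forall>n\<ge>M0. M (L (s m) - L (s n)) < e" by blast
  qed
  moreover have "\<forall>n. L (s n) \<in> Y" using LY s by auto
  moreover from Yb have cmpl: "\<And>u. (\<forall>n. u n \<in> Y) \<and> (\<forall>e>0. \<exists>Ma. \<forall>m\<ge>Ma. \<forall>n\<ge>Ma. M (u m - u n) < e) \<Longrightarrow> (\<exists>x\<in>Y. (\<lambda>n. M (u n - x)) \<longlonglongrightarrow> 0)"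
    unfolding banach_on_def by blast
  ultimately show ?thesis using cmpl[of "\<lambda>n. L (s n)"] by blast
qed

private lemma transfer:
  assumes x: "x \<in> X" and s: "\<And>n. s n \<in> D" and ls: "(\<lambda>n. N (x - s n)) \<longlonglongrightarrow> 0"
    and t: "\<And>n. t n \<in> D" and lt: "(\<lambda>n. N (x - t n)) \<longlonglongrightarrow> 0"
    and y: "y \<in> Y" and ly: "(\<lambda>n. M (L (s n) - y)) \<longlonglongrightarrow> 0"
  shows "(\<lambda>n. M (L (t n) - y)) \<longlonglongrightarrow> 0"
proof (rule lim0_cmp)
  show "0 \<le> M (L (t n) - y)" for n using isn_facts(4)[OF Y isn_minus(1)[OF Y _ y]] LY t by auto
  show "M (L (t n) - y) \<le> K * (N (x - s n) + N (x - t n)) + M (L (s n) - y)" for n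
  proof -
    have "M (L (t n) - y) \<le> M (L (t n) - L (s n)) + M (L (s n) - y)"
      using isn_tri[OF Y _ _ y] LY s t by auto
    moreover have "M (L (t n) - L (s n)) \<le> K * (N (x - s n) + N (x - t n))"
      using close[OF x t[of n] s[of n]] by (simp add: add.commute)
    ultimately show ?thesis by linarith
  qed
  show "(\<lambda>n. K * (N (x - s n) + N (x - t n)) + M (L (s n) - y)) \<longlonglongrightarrow> 0"
    using tendsto_add[OF tendsto_mult_left[OF tendsto_add[OF ls lt], of K] ly] by simp
qed

private definition Lx where
  "Lx x = (SOME y. y \<in> Y \<and> (\<forall>s. (\<forall>n. s n \<in> D) \<and> (\<lambda>n. N (x - s n)) \<longlonglongrightarrow> 0 \<longrightarrow> (\<lambda>n. M (L (s n) - y)) \<longlonglongrightarrow> 0))"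

private lemma Lx_prop:
  assumes x: "x \<in> X"
  shows "Lx x \<in> Y \<and> (\<forall>s. (\<forall>n. s n \<in> D) \<and> (\<lambda>n. N (x - s n)) \<longlonglongrightarrow> 0 \<longrightarrow> (\<lambda>n. M (L (s n) - Lx x)) \<longlonglongrightarrow> 0)"
proof -
  obtain s0 where s0: "\<forall>n. s0 n \<in> D" "(\<lambda>n. N (x - s0 n)) \<longlonglongrightarrow> 0" using approx_seq[OF D x X] by auto
  obtain y where y: "y \<in> Y" "(\<lambda>n. M (L (s0 n) - y)) \<longlonglongrightarrow> 0" using cauchy_lim[OF x _ s0(2)] s0(1) by auto
  have "y \<in> Y \<and> (\<forall>s. (\<forall>n. s n \<in> D) \<and> (\<lambda>n. N (x - s n)) \<longlonglongrightarrow> 0 \<longrightarrow> (\<lambda>n. M (L (s n) - y)) \<longlonglongrightarrow> 0)"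
    using transfer[OF x _ s0(2) _ _ y] s0(1) y(1) by blast
  then show ?thesis unfolding Lx_def by (rule someI)
qed

lemma extend_exists:
  "\<exists>L'. lin_on X L' \<and> (\<forall>x\<in>X. L' x \<in> Y) \<and> (\<forall>x\<in>X. M (L' x) \<le> K * N x) \<and> (\<forall>d\<in>D. L' d = L d)"
proof (rule exI[of _ Lx], intro conjI)
  show LxY: "\<forall>x\<in>X. Lx x \<in> Y" using Lx_prop by blast
  have conv: "(\<lambda>n. M (L (s n) - Lx x)) \<longlonglongrightarrow> 0" if "x \<in> X" "\<And>n. s n \<in> D" "(\<lambda>n. N (x - s n)) \<longlonglongrightarrow> 0" for x s
    using Lx_prop[OF that(1)] that by blast
  show "\<forall>d\<in>D. Lx d = L d"
  proof
    fix d assume d: "d \<in> D"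
    have dX: "d \<in> X" using d DX by auto
    have a: "(\<lambda>n. M (L d - Lx d)) \<longlonglongrightarrow> 0" using conv[OF dX, of "\<lambda>_. d"] d isn_N0[OF X] by simp
    have b: "(\<lambda>n. M (L d - L d)) \<longlonglongrightarrow> 0" using isn_N0[OF Y] by simp
    have "L d \<in> Y" "Lx d \<in> Y" using LY d LxY dX by auto
    from lim_uniq[OF Y _ this b a] show "Lx d = L d" using \<open>L d \<in> Y\<close> by simp
  qed
  show "lin_on X Lx" unfolding lin_on_def
  proof (intro conjI ballI allI)
    fix x y assume x: "x \<in> X" and y: "y \<in> X"
    obtain s where s: "\<forall>n. s n \<in> D" "(\<lambda>n. N (x - s n)) \<longlonglongrightarrow> 0" using approx_seq[OF D x X] by auto
    obtain t where t: "\<forall>n. t n \<in> D" "(\<lambda>n. N (y - t n)) \<longlonglongrightarrow> 0" using approx_seq[OF D y X] by auto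
    have xy: "x + y \<in> X" using isn_facts(2)[OF X x y] .
    have st: "\<And>n. s n + t n \<in> D" using Dadd s(1) t(1) by auto
    have "(\<lambda>n. N ((x + y) - (s n + t n))) \<longlonglongrightarrow> 0"
    proof (rule lim0_cmp)
      show "0 \<le> N ((x + y) - (s n + t n))" for n using isn_facts(4)[OF X isn_minus(1)[OF X xy]] st DX by auto
      show "N ((x + y) - (s n + t n)) \<le> N (x - s n) + N (y - t n)" for n
      proof -
        have "s n \<in> X" "t n \<in> X" using s(1) t(1) DX by auto
        thus ?thesis by (rule isn_tri_plus[OF X x y])
      qed
      show "(\<lambda>n. N (x - s n) + N (y - t n)) \<longlonglongrightarrow> 0" using tendsto_add[OF s(2) t(2)] by simp
    qed
    then have c1: "(\<lambda>n. M (L (s n + t n) - Lx (x + y))) \<longlonglongrightarrow> 0" using conv[OF xy st] by simp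
    have c2: "(\<lambda>n. M (L (s n + t n) - (Lx x + Lx y))) \<longlonglongrightarrow> 0"
    proof (rule lim0_cmp)
      show "0 \<le> M (L (s n + t n) - (Lx x + Lx y))" for n
        using isn_facts(4)[OF Y isn_minus(1)[OF Y]] st LY LxY x y isn_facts(2)[OF Y] by auto
      show "M (L (s n + t n) - (Lx x + Lx y)) \<le> M (L (s n) - Lx x) + M (L (t n) - Lx y)" for n
        using isn_tri_plus[OF Y, of "L (s n)" "L (t n)" "Lx x" "Lx y"] lin_add[OF Llin, of "s n" "t n"]
          s(1) t(1) LY LxY x y by auto
      show "(\<lambda>n. M (L (s n) - Lx x) + M (L (t n) - Lx y)) \<longlonglongrightarrow> 0"
        using tendsto_add[OF conv[OF x] conv[OF y]] s t by simp
    qed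
    show "Lx (x + y) = Lx x + Lx y"
      using lim_uniq[OF Y _ _ _ c1 c2] LY st LxY xy x y isn_facts(2)[OF Y] by auto
  next
    fix x c assume x: "x \<in> X"
    obtain s where s: "\<forall>n. s n \<in> D" "(\<lambda>n. N (x - s n)) \<longlonglongrightarrow> 0" using approx_seq[OF D x X] by auto
    have cx: "c *\<^sub>R x \<in> X" using isn_facts(3)[OF X x] .
    have cs: "\<And>n. c *\<^sub>R s n \<in> D" using Dsc s(1) by auto
    have "N (c *\<^sub>R x - c *\<^sub>R s n) = \<bar>c\<bar> * N (x - s n)" for n
      using isn_facts(6)[OF X isn_minus(1)[OF X x], of "s n" c] s(1) DX by (auto simp: scaleR_diff_right)
    then have "(\<lambda>n. N (c *\<^sub>R x - c *\<^sub>R s n)) \<longlonglongrightarrow> 0" using tendsto_mult_left[OF s(2), of "\<bar>c\<bar>"] by simp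
    then have c1: "(\<lambda>n. M (L (c *\<^sub>R s n) - Lx (c *\<^sub>R x))) \<longlonglongrightarrow> 0" using conv[OF cx cs] by simp
    have "M (L (c *\<^sub>R s n) - c *\<^sub>R Lx x) = \<bar>c\<bar> * M (L (s n) - Lx x)" for n
      using isn_facts(6)[OF Y isn_minus(1)[OF Y], of "L (s n)" "Lx x" c] lin_scale[OF Llin, of "s n" c] s(1) LY LxY x
      by (auto simp: scaleR_diff_right)
    then have c2: "(\<lambda>n. M (L (c *\<^sub>R s n) - c *\<^sub>R Lx x)) \<longlonglongrightarrow> 0"
      using tendsto_mult_left[OF conv[OF x] , of s "\<bar>c\<bar>"] s by simp
    show "Lx (c *\<^sub>R x) = c *\<^sub>R Lx x"
      using lim_uniq[OF Y _ _ _ c1 c2] LY cs LxY cx x isn_facts(3)[OF Y] by auto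
  qed
  show "\<forall>x\<in>X. M (Lx x) \<le> K * N x"
  proof
    fix x assume x: "x \<in> X"
    obtain s where s: "\<forall>n. s n \<in> D" "(\<lambda>n. N (x - s n)) \<longlonglongrightarrow> 0" using approx_seq[OF D x X] by auto
    have h: "M (Lx x) - K * N x \<le> M (L (s n) - Lx x) + K * N (x - s n)" for n
    proof -
      have sX: "s n \<in> X" using s DX by auto
      have "M (Lx x) \<le> M (Lx x - L (s n)) + M (L (s n) - 0)"
        using isn_tri[OF Y _ _ isn_facts(1)[OF Y], of "Lx x" "L (s n)"] LxY x LY s by auto
      then have 1: "M (Lx x) \<le> M (Lx x - L (s n)) + M (L (s n))" by simp
      have 2: "M (Lx x - L (s n)) = M (L (s n) - Lx x)" using isn_commute[OF Y] LxY x LY s by auto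
      have "N (s n - 0) \<le> N (s n - x) + N (x - 0)"
        using isn_tri[OF X sX x isn_facts(1)[OF X]] .
      then have 3: "N (s n) \<le> N (s n - x) + N x" by simp
      have 4: "N (s n - x) = N (x - s n)" using isn_commute[OF X sX x] .
      have 5: "M (L (s n)) \<le> K * N (s n)" using LK s by auto
      have "K * N (s n) \<le> K * (N (x - s n) + N x)" using 3 4 K0 by (simp add: mult_left_mono)
      thus ?thesis using 1 2 5 by (simp add: distrib_left)
    qed
    have cs: "(\<lambda>n. M (L (s n) - Lx x)) \<longlonglongrightarrow> 0" using conv[OF x _ s(2)] s(1) by blast
    have lim: "(\<lambda>n. M (L (s n) - Lx x) + K * N (x - s n)) \<longlonglongrightarrow> 0"
      using tendsto_add[OF cs tendsto_mult_left[OF s(2), of K]] by simp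
    have "M (Lx x) - K * N x \<le> 0" by (rule le_lim0[OF h lim])
    thus "M (Lx x) \<le> K * N x" by simp
  qed
qed

end


lemma sum_fun_apply: "(\<Sum>i<(n::nat). (f i :: 'a \<Rightarrow> 'b::comm_monoid_add)) j = (\<Sum>i<n. f i j)"
  by (induction n) auto

lemma scaleR_fun_apply: "(a *\<^sub>R (f :: 'a \<Rightarrow> 'b::real_vector)) j = a *\<^sub>R f j"
  by (simp add: scaleR_fun_def)

lemma Pn_apply: "(\<Sum>i<n. c i *\<^sub>R e_vec i) j = (if j < n then c j else 0)"
  by (induction n) (auto simp: sum_fun_apply scaleR_fun_apply e_vec_def less_Suc_eq)

lemma BK_isn: "BK_space \<Theta> T \<Longrightarrow> is_norm_on \<Theta> T"
  unfolding BK_space_def banach_on_def by auto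

lemma fnorm_nonneg':
  assumes "\<exists>K\<ge>0. \<forall>x\<in>X. \<bar>g x\<bar> \<le> K * N x"
  shows "0 \<le> fnorm X N g"
  using assms unfolding fnorm_def by (intro cInf_greatest) auto

lemma coord_dual:
  assumes "BK_space \<Theta> T"
  shows "(\<lambda>c. c j) \<in> dual_set \<Theta> T"
proof -
  obtain C where "\<forall>c\<in>\<Theta>. \<bar>c j\<bar> \<le> C * T c" using assms unfolding BK_space_def by auto
  moreover have "lin_on \<Theta> (\<lambda>c. c j)" unfolding lin_on_def by (simp add: scaleR_fun_apply)
  ultimately show ?thesis by (intro dual_setI) auto
qed

lemma Pn_mem: assumes "is_norm_on \<Theta> T" "\<forall>i. e_vec i \<in> \<Theta>" shows "(\<Sum>i<n. c i *\<^sub>R e_vec i) \<in> \<Theta>"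
  using isn_sum[OF assms(1)] assms(2) by auto

lemma dual_Pn:
  assumes "is_norm_on \<Theta> T" "\<forall>i. e_vec i \<in> \<Theta>" "G \<in> dual_set \<Theta> T"
  shows "G (\<Sum>i<n. c i *\<^sub>R e_vec i) = (\<Sum>i<n. G (e_vec i) * c i)"
  using lin_sum[OF dual_lin[OF assms(3)] assms(1), of n e_vec c] assms(2) by (simp add: mult.commute)

lemma coord_uniq:
  assumes CB: "CB_space \<Theta> T" and G: "G \<in> dual_set \<Theta> T" and H: "H \<in> dual_set \<Theta> T"
    and eq: "\<forall>i. G (e_vec i) = H (e_vec i)" and c: "c \<in> \<Theta>"
  shows "G c = H c"
proof -
  have Th: "is_norm_on \<Theta> T" using CB BK_isn unfolding CB_space_def by auto
  have e: "\<forall>i. e_vec i \<in> \<Theta>" using CB unfolding CB_space_def by auto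
  let ?P = "\<lambda>n. (\<Sum>i<n. c i *\<^sub>R e_vec i)"
  have lim: "(\<lambda>n. T (c - ?P n)) \<longlonglongrightarrow> 0" using CB c unfolding CB_space_def by auto
  have h: "\<bar>G c - H c\<bar> \<le> (fnorm \<Theta> T G + fnorm \<Theta> T H) * T (c - ?P n)" for n
  proof -
    have P: "?P n \<in> \<Theta>" using Pn_mem[OF Th e] .
    have cP: "c - ?P n \<in> \<Theta>" using isn_minus(1)[OF Th c P] .
    have "G (?P n) = H (?P n)" using dual_Pn[OF Th e G] dual_Pn[OF Th e H] eq by simp
    then have eqc: "G c - H c = G (c - ?P n) - H (c - ?P n)"
      using lin_diff[OF dual_lin[OF G] Th c P] lin_diff[OF dual_lin[OF H] Th c P] by simp
    have "\<bar>G c - H c\<bar> \<le> \<bar>G (c - ?P n)\<bar> + \<bar>H (c - ?P n)\<bar>" unfolding eqc by linarith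
    also have "\<dots> \<le> fnorm \<Theta> T G * T (c - ?P n) + fnorm \<Theta> T H * T (c - ?P n)"
      using fnorm_bound[OF Th G cP] fnorm_bound[OF Th H cP] by linarith
    finally show ?thesis by (simp add: distrib_right)
  qed
  have lim2: "(\<lambda>n. (fnorm \<Theta> T G + fnorm \<Theta> T H) * T (c - ?P n)) \<longlonglongrightarrow> 0"
    using tendsto_mult_left[OF lim, of "fnorm \<Theta> T G + fnorm \<Theta> T H"] by simp
  have "\<bar>G c - H c\<bar> \<le> 0" by (rule le_lim0[OF h lim2])
  thus ?thesis by simp
qed


definition ultra :: "'a filter \<Rightarrow> bool" where
  "ultra F \<longleftrightarrow> F \<noteq> bot \<and> (\<forall>P. eventually P F \<or> eventually (\<lambda>x. \<not> P x) F)"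

lemma extend_filter': "frequently P F \<Longrightarrow> inf F (principal {x. P x}) \<noteq> bot"
  by (simp add: trivial_limit_def eventually_inf_principal not_eventually)

lemma max_filter_ultra:
  assumes "F \<noteq> bot"
  assumes max: "\<And>G. G \<noteq> bot \<Longrightarrow> G \<le> F \<Longrightarrow> F = G"
  shows "ultra F"
  unfolding ultra_def
proof (intro conjI allI)
  show "F \<noteq> bot" by fact
  fix P
  show "eventually P F \<or> (\<forall>\<^sub>Fx in F. \<not> P x)"
  proof (rule disjCI)
    assume "\<not> (\<forall>\<^sub>Fx in F. \<not> P x)"
    then have "inf F (principal {x. P x}) \<noteq> bot"
      by (simp add: not_eventually extend_filter')
    then have F: "F = inf F (principal {x. P x})"
      by (rule max) simp
    show "eventually P F"
      by (subst F) (simp add: eventually_inf_principal)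
  qed
qed

lemma ex_ultra:
  fixes F :: "'a filter"
  assumes F: "F \<noteq> bot"
  shows "\<exists>U\<le>F. ultra U"
proof -
  let ?X = "{G. G \<noteq> bot \<and> G \<le> F}"
  let ?R = "{(b, a). a \<noteq> bot \<and> a \<le> b \<and> b \<le> F}"

  have bot_notin_R: "c \<in> Chains ?R \<Longrightarrow> bot \<notin> c" for c
    by (auto simp: Chains_def)

  have [simp]: "Field ?R = ?X"
    by (auto simp: Field_def bot_unique)

  have "\<exists>m\<in>Field ?R. \<forall>a\<in>Field ?R. (m, a) \<in> ?R \<longrightarrow> a = m" (is "\<exists>m\<in>?A. ?B m")
  proof (rule Zorns_po_lemma)
    show "Partial_order ?R"
      by (auto simp: partial_order_on_def preorder_on_def
          antisym_def refl_on_def trans_def Field_def bot_unique)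
    show "\<exists>u\<in>Field ?R. \<forall>a\<in>C. (a, u) \<in> ?R" if C: "C \<in> Chains ?R" for C
    proof (simp, intro exI conjI ballI)
      have Inf_C: "Inf C \<noteq> bot" "Inf C \<le> F" if "C \<noteq> {}"
      proof -
        from C that have "Inf C = bot \<longleftrightarrow> (\<exists>x\<in>C. x = bot)"
          unfolding trivial_limit_def by (intro eventually_Inf_base) (auto simp: Chains_def)
        with C show "Inf C \<noteq> bot"
          by (simp add: bot_notin_R)
        from that obtain x where "x \<in> C" by auto
        with C show "Inf C \<le> F"
          by (auto intro!: Inf_lower2[of x] simp: Chains_def)
      qed
      then have [simp]: "inf F (Inf C) = (if C = {} then F else Inf C)"
        using C by (auto simp add: inf_absorb2)
      from C show "inf F (Inf C) \<noteq> bot"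
        by (simp add: F Inf_C)
      from C show "inf F (Inf C) \<le> F"
        by (simp add: Chains_def Inf_C F)
      with C show "inf F (Inf C) \<le> x" "x \<le> F" if "x \<in> C" for x
        using that  by (auto intro: Inf_lower simp: Chains_def)
    qed
  qed
  then obtain U where U: "U \<in> ?A" "?B U" ..
  show ?thesis
  proof
    from U show "U \<le> F \<and> ultra U"
      by (auto intro!: max_filter_ultra)
  qed
qed

lemma ultra_lim:
  fixes a :: "'b \<Rightarrow> real"
  assumes U: "ultra U" and b: "\<forall>k. \<bar>a k\<bar> \<le> B"
  shows "\<exists>L. (a \<longlongrightarrow> L) U"
proof -
  have Ub: "U \<noteq> bot" using U unfolding ultra_def by auto
  have "compact {-B..B}" by simp
  moreover have "filtermap a U \<noteq> bot" using Ub by (simp add: filtermap_bot_iff)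
  moreover have "eventually (\<lambda>x. x \<in> {-B..B}) (filtermap a U)"
    using b by (auto simp: eventually_filtermap abs_le_iff intro!: always_eventually) (metis minus_le_iff)
  ultimately obtain L where L: "inf (nhds L) (filtermap a U) \<noteq> bot"
    unfolding compact_filter by blast
  have "(a \<longlongrightarrow> L) U"
  proof (rule topological_tendstoI)
    fix S :: "real set" assume S: "open S" "L \<in> S"
    show "eventually (\<lambda>k. a k \<in> S) U"
    proof (rule ccontr)
      assume "\<not> eventually (\<lambda>k. a k \<in> S) U"
      then have ev: "eventually (\<lambda>k. a k \<notin> S) U" using U unfolding ultra_def by blast
      have "eventually (\<lambda>x. x \<in> S) (nhds L)" using S by (simp add: eventually_nhds_in_open)
      moreover have "eventually (\<lambda>x. x \<notin> S) (filtermap a U)" using ev by (simp add: eventually_filtermap)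
      ultimately have "eventually (\<lambda>x. False) (inf (nhds L) (filtermap a U))"
        unfolding eventually_inf by blast
      thus False using L by (simp add: trivial_limit_def)
    qed
  qed
  thus ?thesis by blast
qed

lemma shrinking:
  assumes lBK: "lambda_BK \<Theta> T l" and refl: "reflexive_on \<Theta> T" and H: "H \<in> dual_set \<Theta> T"
  shows "(\<lambda>n. fnorm \<Theta> T (\<lambda>c. H c - (\<Sum>i<n. H (e_vec i) * c i))) \<longlonglongrightarrow> 0"
proof -
  have BK: "BK_space \<Theta> T" using lBK unfolding lambda_BK_def by auto
  have Th: "is_norm_on \<Theta> T" using BK_isn[OF BK] .
  have e: "\<forall>i. e_vec i \<in> \<Theta>" using lBK unfolding lambda_BK_def by auto
  have lam: "\<And>c n. c \<in> \<Theta> \<Longrightarrow> T (\<Sum>i<n. c i *\<^sub>R e_vec i) \<le> l * T c" using lBK unfolding lambda_BK_def by auto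
  define C0 where "C0 = 1 + \<bar>l\<bar>"
  have C0: "C0 > 0" unfolding C0_def by simp
  define D where "D = (\<lambda>n c. H c - (\<Sum>i<n. H (e_vec i) * c i))"
  let ?P = "\<lambda>n c. (\<Sum>i<n. c i *\<^sub>R e_vec i)"
  have Dform: "D n c = H (c - ?P n c)" if c: "c \<in> \<Theta>" for n c
    using lin_diff[OF dual_lin[OF H] Th c Pn_mem[OF Th e]] dual_Pn[OF Th e H] unfolding D_def by simp
  have vbound: "T (c - ?P n c) \<le> C0 * T c" if c: "c \<in> \<Theta>" for n c
  proof -
    have "T (c - ?P n c) \<le> T c + T (?P n c)" using isn_tri_diff[OF Th c Pn_mem[OF Th e]] .
    moreover have "T (?P n c) \<le> \<bar>l\<bar> * T c"
      using lam[OF c, of n] isn_facts(4)[OF Th c] by (smt (verit) abs_ge_self mult_right_mono)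
    ultimately show ?thesis unfolding C0_def by (simp add: distrib_right)
  qed
  have fH: "0 \<le> fnorm \<Theta> T H" using fnorm_nonneg[OF Th H] .
  have Dbound: "\<bar>D n c\<bar> \<le> fnorm \<Theta> T H * C0 * T c" if c: "c \<in> \<Theta>" for n c
  proof -
    have "\<bar>D n c\<bar> \<le> fnorm \<Theta> T H * T (c - ?P n c)"
      unfolding Dform[OF c] using fnorm_bound[OF Th H isn_minus(1)[OF Th c Pn_mem[OF Th e]]] .
    also have "\<dots> \<le> fnorm \<Theta> T H * (C0 * T c)" using vbound[OF c] fH by (rule mult_left_mono)
    finally show ?thesis by (simp add: mult.assoc)
  qed
  have Dnn: "0 \<le> fnorm \<Theta> T (D n)" for n
    using Dbound isn_facts(4)[OF Th] fH C0 by (intro fnorm_nonneg') (auto intro!: exI[of _ "fnorm \<Theta> T H * C0"])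
  have "(\<lambda>n. fnorm \<Theta> T (D n)) \<longlonglongrightarrow> 0"
  proof (rule ccontr)
    assume "\<not> (\<lambda>n. fnorm \<Theta> T (D n)) \<longlonglongrightarrow> 0"
    then obtain r where r: "r > 0" "\<forall>no. \<exists>n\<ge>no. \<not> \<bar>fnorm \<Theta> T (D n) - 0\<bar> < r"
      unfolding LIMSEQ_iff by auto
    then have big: "\<forall>no. \<exists>n\<ge>no. r \<le> fnorm \<Theta> T (D n)" using Dnn by force
    have "\<forall>k. \<exists>u. u \<in> \<Theta> \<and> r / 2 < H u \<and> T u \<le> C0 \<and> (\<forall>i<k. u i = 0)"
    proof
      fix k
      obtain n where n: "n \<ge> k" "r \<le> fnorm \<Theta> T (D n)" using big by auto
      have "\<exists>c\<in>\<Theta>. r / 2 * T c < \<bar>D n c\<bar>"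
      proof (rule ccontr)
        assume "\<not> (\<exists>c\<in>\<Theta>. r / 2 * T c < \<bar>D n c\<bar>)"
        then have "\<forall>c\<in>\<Theta>. \<bar>D n c\<bar> \<le> r / 2 * T c" by (auto simp: not_less)
        then have "fnorm \<Theta> T (D n) \<le> r / 2" using r(1) by (intro fnorm_le[OF Th]) auto
        thus False using n(2) r(1) by linarith
      qed
      then obtain c where c: "c \<in> \<Theta>" "r / 2 * T c < \<bar>D n c\<bar>" by auto
      have Tc: "T c > 0"
      proof (rule ccontr)
        assume "\<not> T c > 0"
        then have "T c = 0" using isn_facts(4)[OF Th c(1)] by simp
        thus False using c(2) Dbound[OF c(1), of n] by simp
      qed
      define v where "v = c - ?P n c"
      have v: "v \<in> \<Theta>" unfolding v_def using isn_minus(1)[OF Th c(1) Pn_mem[OF Th e]] .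
      have Hv: "D n c = H v" unfolding v_def using Dform[OF c(1)] .
      define u where "u = (sgn (H v) / T c) *\<^sub>R v"
      show "\<exists>u. u \<in> \<Theta> \<and> r / 2 < H u \<and> T u \<le> C0 \<and> (\<forall>i<k. u i = 0)"
      proof (intro exI[of _ u] conjI allI impI)
        show "u \<in> \<Theta>" unfolding u_def using isn_facts(3)[OF Th v] .
        have "H u = sgn (H v) / T c * H v" unfolding u_def using lin_scale[OF dual_lin[OF H] v] by simp
        also have "\<dots> = \<bar>H v\<bar> / T c" by (simp add: abs_sgn mult.commute)
        finally have Hu: "H u = \<bar>H v\<bar> / T c" .
        show "r / 2 < H u" unfolding Hu using c(2) Tc Hv by (simp add: pos_less_divide_eq)
        have "T u = \<bar>sgn (H v) / T c\<bar> * T v" unfolding u_def using isn_facts(6)[OF Th v] .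
        also have "\<dots> \<le> 1 / T c * T v"
          using Tc isn_facts(4)[OF Th v] by (intro mult_right_mono) (auto simp: abs_sgn_eq)
        also have "\<dots> \<le> 1 / T c * (C0 * T c)" using vbound[OF c(1), of n] Tc unfolding v_def
          by (intro mult_left_mono) auto
        also have "\<dots> = C0" using Tc by simp
        finally show "T u \<le> C0" .
        fix i assume "i < k"
        then show "u i = 0" unfolding u_def v_def using n(1)
          by (simp add: scaleR_fun_apply Pn_apply)
      qed
    qed
    then obtain useq where us: "\<And>k. useq k \<in> \<Theta>" "\<And>k. r / 2 < H (useq k)" "\<And>k. T (useq k) \<le> C0"
      "\<And>k i. i < k \<Longrightarrow> useq k i = 0"
      by metis
    obtain U where U: "U \<le> sequentially" "ultra U" using ex_ultra[of sequentially] by auto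
    have Ub: "U \<noteq> bot" using U(2) unfolding ultra_def by auto
    define \<phi> where "\<phi> G = Lim U (\<lambda>k. G (useq k))" for G :: "(nat \<Rightarrow> real) \<Rightarrow> real"
    have gb: "\<bar>G (useq k)\<bar> \<le> fnorm \<Theta> T G * C0" if G: "G \<in> dual_set \<Theta> T" for G k
    proof -
      have "\<bar>G (useq k)\<bar> \<le> fnorm \<Theta> T G * T (useq k)" using fnorm_bound[OF Th G us(1)] .
      also have "\<dots> \<le> fnorm \<Theta> T G * C0" using us(3) fnorm_nonneg[OF Th G] by (rule mult_left_mono)
      finally show ?thesis .
    qed
    have conv: "((\<lambda>k. G (useq k)) \<longlongrightarrow> \<phi> G) U" if G: "G \<in> dual_set \<Theta> T" for G
    proof -
      obtain L where "((\<lambda>k. G (useq k)) \<longlongrightarrow> L) U" using ultra_lim[OF U(2), of "\<lambda>k. G (useq k)"] gb[OF G] by blast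
      moreover then have "\<phi> G = L" unfolding \<phi>_def using Ub by (simp add: tendsto_Lim)
      ultimately show ?thesis by simp
    qed
    have "\<exists>x\<in>\<Theta>. \<forall>h\<in>dual_set \<Theta> T. \<phi> h = h x"
    proof (rule refl[unfolded reflexive_on_def, rule_format], intro conjI ballI allI)
      fix h1 h2 assume h1: "h1 \<in> dual_set \<Theta> T" and h2: "h2 \<in> dual_set \<Theta> T"
      have "((\<lambda>k. h1 (useq k) + h2 (useq k)) \<longlongrightarrow> \<phi> h1 + \<phi> h2) U" using tendsto_add[OF conv[OF h1] conv[OF h2]] .
      then show "\<phi> (\<lambda>x. h1 x + h2 x) = \<phi> h1 + \<phi> h2" unfolding \<phi>_def[of "\<lambda>x. h1 x + h2 x"] using Ub by (simp add: tendsto_Lim)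
    next
      fix h c assume h: "h \<in> dual_set \<Theta> T"
      have "((\<lambda>k. c * h (useq k)) \<longlongrightarrow> c * \<phi> h) U" using tendsto_mult_left[OF conv[OF h]] .
      then show "\<phi> (\<lambda>x. c * h x) = c * \<phi> h" unfolding \<phi>_def[of "\<lambda>x. c * h x"] using Ub by (simp add: tendsto_Lim)
    next
      show "\<exists>K. \<forall>h\<in>dual_set \<Theta> T. \<bar>\<phi> h\<bar> \<le> K * fnorm \<Theta> T h"
      proof (intro exI ballI)
        fix h assume h: "h \<in> dual_set \<Theta> T"
        have "\<bar>\<phi> h\<bar> \<le> fnorm \<Theta> T h * C0"
          by (rule tendsto_le[OF Ub tendsto_const tendsto_rabs[OF conv[OF h]]]) (use gb[OF h] in \<open>auto intro!: always_eventually\<close>)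
        thus "\<bar>\<phi> h\<bar> \<le> C0 * fnorm \<Theta> T h" by (simp add: mult.commute)
      qed
    qed
    then obtain x where x: "x \<in> \<Theta>" "\<forall>h\<in>dual_set \<Theta> T. \<phi> h = h x" by auto
    have "x j = 0" for j
    proof -
      have "eventually (\<lambda>k. useq k j = 0) sequentially"
        using us(4) by (intro eventually_sequentiallyI[of "Suc j"]) auto
      then have "eventually (\<lambda>k. useq k j = 0) U" by (rule filter_leD[OF U(1)])
      then have "((\<lambda>k. useq k j) \<longlongrightarrow> 0) U" by (rule tendsto_eventually)
      then have "\<phi> (\<lambda>c. c j) = 0" unfolding \<phi>_def using Ub by (simp add: tendsto_Lim)
      thus ?thesis using x(2) coord_dual[OF BK, of j] by simp
    qed
    then have x0: "x = 0" by (simp add: fun_eq_iff)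
    have "\<phi> H = 0" using x(2) H x0 lin_zero[OF dual_lin[OF H] Th] by simp
    moreover have "r / 2 \<le> \<phi> H"
      by (rule tendsto_le[OF Ub conv[OF H] tendsto_const]) (use us(2) in \<open>auto intro!: always_eventually less_imp_le\<close>)
    ultimately show False using r(1) by simp
  qed
  thus ?thesis unfolding D_def .
qed


lemma isn_real: "is_norm_on (UNIV::real set) abs"
  unfolding is_norm_on_def by (auto simp: abs_mult abs_triangle_ineq)

lemma fnorm_bound':
  assumes X: "is_norm_on X N" and K: "\<exists>K\<ge>0. \<forall>x\<in>X. \<bar>g x\<bar> \<le> K * N x" and x: "x \<in> X"
  shows "\<bar>g x\<bar> \<le> fnorm X N g * N x"
proof (cases "N x = 0")
  case True
  then show ?thesis using K x by fastforce
next
  case False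
  then have pos: "N x > 0" using isn_facts(4)[OF X x] by simp
  have ne: "{K. 0 \<le> K \<and> (\<forall>x\<in>X. \<bar>g x\<bar> \<le> K * N x)} \<noteq> {}" using K by auto
  have "\<bar>g x\<bar> / N x \<le> fnorm X N g" unfolding fnorm_def
  proof (rule cInf_greatest[OF ne])
    fix K assume "K \<in> {K. 0 \<le> K \<and> (\<forall>x\<in>X. \<bar>g x\<bar> \<le> K * N x)}"
    then have "\<bar>g x\<bar> \<le> K * N x" using x by auto
    thus "\<bar>g x\<bar> / N x \<le> K" using pos by (simp add: divide_le_eq)
  qed
  thus ?thesis using pos by (simp add: divide_le_eq)
qed

lemma D_form:
  assumes Th: "is_norm_on \<Theta> T" and e: "\<forall>i. e_vec i \<in> \<Theta>" and H: "H \<in> dual_set \<Theta> T" and c: "c \<in> \<Theta>"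
  shows "H c - (\<Sum>i<n. H (e_vec i) * c i) = H (c - (\<Sum>i<n. c i *\<^sub>R e_vec i))"
  using lin_diff[OF dual_lin[OF H] Th c Pn_mem[OF Th e]] dual_Pn[OF Th e H] by simp

lemma tail_bound:
  assumes lBK: "lambda_BK \<Theta> T l" and c: "c \<in> \<Theta>"
  shows "T (c - (\<Sum>i<n. c i *\<^sub>R e_vec i)) \<le> (1 + \<bar>l\<bar>) * T c"
proof -
  have Th: "is_norm_on \<Theta> T" using lBK BK_isn unfolding lambda_BK_def by auto
  have e: "\<forall>i. e_vec i \<in> \<Theta>" using lBK unfolding lambda_BK_def by auto
  have lam: "T (\<Sum>i<n. c i *\<^sub>R e_vec i) \<le> l * T c" using lBK c unfolding lambda_BK_def by auto
  have "T (c - (\<Sum>i<n. c i *\<^sub>R e_vec i)) \<le> T c + T (\<Sum>i<n. c i *\<^sub>R e_vec i)"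
    using isn_tri_diff[OF Th c Pn_mem[OF Th e]] .
  moreover have "l * T c \<le> \<bar>l\<bar> * T c" using isn_facts(4)[OF Th c] by (intro mult_right_mono) auto
  ultimately show ?thesis using lam by (simp add: distrib_right)
qed

lemma Dn_dual:
  assumes lBK: "lambda_BK \<Theta> T l" and H: "H \<in> dual_set \<Theta> T"
  shows "(\<lambda>c. H c - (\<Sum>i<n. H (e_vec i) * c i)) \<in> dual_set \<Theta> T"
proof (rule dual_setI)
  have Th: "is_norm_on \<Theta> T" using lBK BK_isn unfolding lambda_BK_def by auto
  have e: "\<forall>i. e_vec i \<in> \<Theta>" using lBK unfolding lambda_BK_def by auto
  show "lin_on \<Theta> (\<lambda>c. H c - (\<Sum>i<n. H (e_vec i) * c i))"
    unfolding lin_on_def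
  proof (intro conjI ballI allI)
    fix x y assume x: "x \<in> \<Theta>" and y: "y \<in> \<Theta>"
    have s: "(\<Sum>i<n. H (e_vec i) * (x + y) i) = (\<Sum>i<n. H (e_vec i) * x i) + (\<Sum>i<n. H (e_vec i) * y i)"
      by (simp add: distrib_left sum.distrib)
    show "H (x + y) - (\<Sum>i<n. H (e_vec i) * (x + y) i) = H x - (\<Sum>i<n. H (e_vec i) * x i) + (H y - (\<Sum>i<n. H (e_vec i) * y i))"
      unfolding s using lin_add[OF dual_lin[OF H] x y] by simp
  next
    fix x c assume x: "x \<in> \<Theta>"
    have s: "(\<Sum>i<n. H (e_vec i) * (c *\<^sub>R x) i) = c * (\<Sum>i<n. H (e_vec i) * x i)"
      by (simp add: scaleR_fun_apply sum_distrib_left mult.left_commute)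
    show "H (c *\<^sub>R x) - (\<Sum>i<n. H (e_vec i) * (c *\<^sub>R x) i) = c *\<^sub>R (H x - (\<Sum>i<n. H (e_vec i) * x i))"
      unfolding s using lin_scale[OF dual_lin[OF H] x, of c] by (simp add: right_diff_distrib)
  qed
  show "\<forall>c\<in>\<Theta>. \<bar>H c - (\<Sum>i<n. H (e_vec i) * c i)\<bar> \<le> (fnorm \<Theta> T H * (1 + \<bar>l\<bar>)) * T c"
  proof
    fix c assume c: "c \<in> \<Theta>"
    have "\<bar>H c - (\<Sum>i<n. H (e_vec i) * c i)\<bar> \<le> fnorm \<Theta> T H * T (c - (\<Sum>i<n. c i *\<^sub>R e_vec i))"
      unfolding D_form[OF Th e H c] using fnorm_bound[OF Th H isn_minus(1)[OF Th c Pn_mem[OF Th e]]] .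
    also have "\<dots> \<le> fnorm \<Theta> T H * ((1 + \<bar>l\<bar>) * T c)"
      using tail_bound[OF lBK c] fnorm_nonneg[OF Th H] by (rule mult_left_mono)
    finally show "\<bar>H c - (\<Sum>i<n. H (e_vec i) * c i)\<bar> \<le> (fnorm \<Theta> T H * (1 + \<bar>l\<bar>)) * T c" by (simp add: mult.assoc)
  qed
qed

lemma sd_some:
  assumes CB: "CB_space \<Theta> T" and G: "G \<in> dual_set \<Theta> T" and d: "\<forall>i. d i = G (e_vec i)"
  shows "(SOME G'. G' \<in> dual_set \<Theta> T \<and> (\<forall>i. d i = G' (e_vec i))) \<in> dual_set \<Theta> T
         \<and> (\<forall>z\<in>\<Theta>. (SOME G'. G' \<in> dual_set \<Theta> T \<and> (\<forall>i. d i = G' (e_vec i))) z = G z)"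
proof -
  let ?S = "SOME G'. G' \<in> dual_set \<Theta> T \<and> (\<forall>i. d i = G' (e_vec i))"
  have "G \<in> dual_set \<Theta> T \<and> (\<forall>i. d i = G (e_vec i))" using G d by blast
  then have S: "?S \<in> dual_set \<Theta> T \<and> (\<forall>i. d i = ?S (e_vec i))"
    using someI_ex[of "\<lambda>G'. G' \<in> dual_set \<Theta> T \<and> (\<forall>i. d i = G' (e_vec i))"] by blast
  have "\<forall>i. ?S (e_vec i) = G (e_vec i)" using S d by metis
  then have "\<forall>z\<in>\<Theta>. ?S z = G z" using coord_uniq[OF CB conjunct1[OF S] G] by blast
  thus ?thesis using S by blast
qed

lemma sdn_eq:
  assumes CB: "CB_space \<Theta> T" and G: "G \<in> dual_set \<Theta> T" and d: "\<forall>i. d i = G (e_vec i)"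
  shows "seq_dual_norm \<Theta> T d = fnorm \<Theta> T G"
  unfolding seq_dual_norm_def by (rule fnorm_cong) (use sd_some[OF assms] in blast)

lemma dual_comp:
  assumes Y: "is_norm_on Y T" and X: "is_norm_on X N" and h: "h \<in> dual_set X N"
    and V: "lin_on Y V" "\<forall>c\<in>Y. V c \<in> X" "\<forall>c\<in>Y. N (V c) \<le> K * T c" and K: "0 \<le> K"
  shows "(\<lambda>c. h (V c)) \<in> dual_set Y T" "fnorm Y T (\<lambda>c. h (V c)) \<le> fnorm X N h * K"
proof -
  have b: "\<forall>c\<in>Y. \<bar>h (V c)\<bar> \<le> (fnorm X N h * K) * T c"
  proof
    fix c assume c: "c \<in> Y"
    have "\<bar>h (V c)\<bar> \<le> fnorm X N h * N (V c)" using fnorm_bound[OF X h] V(2) c by auto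
    also have "\<dots> \<le> fnorm X N h * (K * T c)" using V(3) c fnorm_nonneg[OF X h] by (intro mult_left_mono) auto
    finally show "\<bar>h (V c)\<bar> \<le> (fnorm X N h * K) * T c" by (simp add: mult.assoc)
  qed
  have l: "lin_on Y (\<lambda>c. h (V c))" unfolding lin_on_def
  proof (intro conjI ballI allI)
    fix x y assume x: "x \<in> Y" and y: "y \<in> Y"
    show "h (V (x + y)) = h (V x) + h (V y)"
      using lin_add[OF V(1) x y] lin_add[OF dual_lin[OF h] V(2)[rule_format, OF x] V(2)[rule_format, OF y]] by simp
  next
    fix x c assume x: "x \<in> Y"
    show "h (V (c *\<^sub>R x)) = c *\<^sub>R h (V x)"
      using lin_scale[OF V(1) x] lin_scale[OF dual_lin[OF h] V(2)[rule_format, OF x]] by simp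
  qed
  show "(\<lambda>c. h (V c)) \<in> dual_set Y T" by (rule dual_setI[OF l b])
  show "fnorm Y T (\<lambda>c. h (V c)) \<le> fnorm X N h * K"
    by (rule fnorm_le[OF Y _ b]) (use fnorm_nonneg[OF X h] K in simp)
qed


lemma Fseq_facts:
  assumes "F_seq X N"
  shows "is_norm_on (X s) (N s)" "banach_on (X s) (N s)" "dense_in (X s) (N s) (\<Inter>r. X r)"
    "(\<Inter>r. X r) \<subseteq> X s" "\<forall>x\<in>(\<Inter>r. X r). \<forall>y\<in>(\<Inter>r. X r). x + y \<in> (\<Inter>r. X r)"
    "\<forall>x\<in>(\<Inter>r. X r). \<forall>c. c *\<^sub>R x \<in> (\<Inter>r. X r)"
proof -
  have b: "banach_on (X r) (N r)" for r using assms unfolding F_seq_def separable_banach_def by auto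
  then have n: "is_norm_on (X r) (N r)" for r unfolding banach_on_def by auto
  show "is_norm_on (X s) (N s)" "banach_on (X s) (N s)" using b n by auto
  show "dense_in (X s) (N s) (\<Inter>r. X r)" using assms unfolding F_seq_def by auto
  show "(\<Inter>r. X r) \<subseteq> X s" by auto
  show "\<forall>x\<in>(\<Inter>r. X r). \<forall>y\<in>(\<Inter>r. X r). x + y \<in> (\<Inter>r. X r)" using isn_facts(2)[OF n] by blast
  show "\<forall>x\<in>(\<Inter>r. X r). \<forall>c. c *\<^sub>R x \<in> (\<Inter>r. X r)" using isn_facts(3)[OF n] by blast
qed

lemma lin_comp:
  assumes "lin_on X G" "\<forall>x\<in>X. G x \<in> Y" "lin_on Y V"
  shows "lin_on X (\<lambda>x. V (G x))"
  unfolding lin_on_def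
proof (intro conjI ballI allI)
  fix x y assume x: "x \<in> X" and y: "y \<in> X"
  show "V (G (x + y)) = V (G x) + V (G y)"
    using lin_add[OF assms(1) x y] lin_add[OF assms(3)] assms(2) x y by simp
next
  fix x c assume x: "x \<in> X"
  show "V (G (c *\<^sub>R x)) = c *\<^sub>R V (G x)"
    using lin_scale[OF assms(1) x] lin_scale[OF assms(3)] assms(2) x by simp
qed

locale fsetting =
  fixes X :: "nat \<Rightarrow> 'a::real_vector set" and N :: "nat \<Rightarrow> 'a \<Rightarrow> real"
    and \<Theta> :: "nat \<Rightarrow> (nat \<Rightarrow> real) set" and T :: "nat \<Rightarrow> (nat \<Rightarrow> real) \<Rightarrow> real"
    and g :: "nat \<Rightarrow> 'a \<Rightarrow> real" and V0 :: "(nat \<Rightarrow> real) \<Rightarrow> 'a"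
  assumes FX: "F_seq X N" and FT: "F_seq \<Theta> T" and lBK: "\<forall>s. \<exists>l. lambda_BK (\<Theta> s) (T s) l"
    and pre: "pre_F_frame X N \<Theta> T g"
    and V0: "\<forall>c\<in>(\<Inter>r. \<Theta> r). V0 c \<in> (\<Inter>r. X r)"
      "\<forall>c\<in>(\<Inter>r. \<Theta> r). \<forall>d\<in>(\<Inter>r. \<Theta> r). V0 (c + d) = V0 c + V0 d"
      "\<forall>c\<in>(\<Inter>r. \<Theta> r). \<forall>a. V0 (a *\<^sub>R c) = a *\<^sub>R V0 c"
      "\<forall>s. \<exists>K. \<forall>c\<in>(\<Inter>r. \<Theta> r). N s (V0 c) \<le> K * T s c"
      "\<forall>f\<in>(\<Inter>r. X r). V0 (\<lambda>i. g i f) = f"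
begin

lemmas Xf = Fseq_facts[OF FX]
lemmas Tf = Fseq_facts[OF FT]

lemma BKs: "BK_space (\<Theta> s) (T s)" using lBK unfolding lambda_BK_def by blast
lemma ev: "e_vec i \<in> \<Theta> s" using lBK unfolding lambda_BK_def by blast
lemma evF: "e_vec i \<in> (\<Inter>r. \<Theta> r)" using ev by blast
lemma gF: "f \<in> (\<Inter>r. X r) \<Longrightarrow> (\<lambda>i. g i f) \<in> (\<Inter>r. \<Theta> r)" using pre unfolding pre_F_frame_def by blast
lemma gB: "\<exists>B>0. \<forall>f\<in>(\<Inter>r. X r). T s (\<lambda>i. g i f) \<le> B * N s f"
proof -
  obtain A B where "0 < A" "A \<le> B" "\<forall>f\<in>(\<Inter>r. X r). A * N s f \<le> T s (\<lambda>i. g i f) \<and> T s (\<lambda>i. g i f) \<le> B * N s f"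
    using pre unfolding pre_F_frame_def by blast
  thus ?thesis by (intro exI[of _ B]) auto
qed
lemma glin: "x \<in> (\<Inter>r. X r) \<Longrightarrow> y \<in> (\<Inter>r. X r) \<Longrightarrow> g i (x + y) = g i x + g i y"
  "x \<in> (\<Inter>r. X r) \<Longrightarrow> g i (c *\<^sub>R x) = c * g i x"
proof -
  have "g i \<in> frechet_dual X N" using pre unfolding pre_F_frame_def by blast
  then have a: "\<forall>x\<in>(\<Inter>r. X r). \<forall>y\<in>(\<Inter>r. X r). g i (x + y) = g i x + g i y"
    and b: "\<forall>x\<in>(\<Inter>r. X r). \<forall>c. g i (c *\<^sub>R x) = c * g i x"
    unfolding frechet_dual_def by blast+
  show "x \<in> (\<Inter>r. X r) \<Longrightarrow> y \<in> (\<Inter>r. X r) \<Longrightarrow> g i (x + y) = g i x + g i y" using a by blast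
  show "x \<in> (\<Inter>r. X r) \<Longrightarrow> g i (c *\<^sub>R x) = c * g i x" using b by blast
qed

lemma Gs_ex: "\<exists>G B. 0 < B \<and> lin_on (X s) G \<and> (\<forall>x\<in>X s. G x \<in> \<Theta> s) \<and> (\<forall>x\<in>X s. T s (G x) \<le> B * N s x)
   \<and> (\<forall>x\<in>(\<Inter>r. X r). G x = (\<lambda>i. g i x))"
proof -
  obtain B where B: "B > 0" "\<forall>f\<in>(\<Inter>r. X r). T s (\<lambda>i. g i f) \<le> B * N s f" using gB by blast
  have lin: "lin_on (\<Inter>r. X r) (\<lambda>x i. g i x)" unfolding lin_on_def
  proof (intro conjI ballI allI)
    fix x y assume x: "x \<in> (\<Inter>r. X r)" and y: "y \<in> (\<Inter>r. X r)"
    show "(\<lambda>i. g i (x + y)) = (\<lambda>i. g i x) + (\<lambda>i. g i y)"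
      by (rule ext) (simp add: glin(1)[OF x y])
  next
    fix x c assume x: "x \<in> (\<Inter>r. X r)"
    show "(\<lambda>i. g i (c *\<^sub>R x)) = c *\<^sub>R (\<lambda>i. g i x)"
      by (rule ext) (simp add: glin(2)[OF x] scaleR_fun_apply)
  qed
  have gY: "\<forall>d\<in>(\<Inter>r. X r). (\<lambda>i. g i d) \<in> \<Theta> s" using gF by blast
  note ext = extend_exists[of "X s" "N s" "\<Theta> s" "T s" "\<Inter>r. X r" "\<lambda>x i. g i x" B]
  from ext[OF Xf(1) Tf(2) Xf(3) Xf(5) Xf(6) lin gY B(2) less_imp_le[OF B(1)]]
  obtain L where "lin_on (X s) L \<and> (\<forall>x\<in>X s. L x \<in> \<Theta> s) \<and> (\<forall>x\<in>X s. T s (L x) \<le> B * N s x) \<and> (\<forall>d\<in>(\<Inter>r. X r). L d = (\<lambda>i. g i d))"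
    by blast
  thus ?thesis using B(1) by (intro exI[of _ L] exI[of _ B]) simp
qed

lemma Vs_ex: "\<exists>V K. 0 < K \<and> lin_on (\<Theta> s) V \<and> (\<forall>c\<in>\<Theta> s. V c \<in> X s) \<and> (\<forall>c\<in>\<Theta> s. N s (V c) \<le> K * T s c)
   \<and> (\<forall>c\<in>(\<Inter>r. \<Theta> r). V c = V0 c)"
proof -
  obtain K0 where K0: "\<forall>c\<in>(\<Inter>r. \<Theta> r). N s (V0 c) \<le> K0 * T s c" using V0(4) by blast
  have K: "\<forall>c\<in>(\<Inter>r. \<Theta> r). N s (V0 c) \<le> max K0 1 * T s c"
  proof
    fix c assume c: "c \<in> (\<Inter>r. \<Theta> r)"
    have "0 \<le> T s c" using isn_facts(4)[OF Tf(1)] c by blast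
    then have "K0 * T s c \<le> max K0 1 * T s c" by (intro mult_right_mono) auto
    thus "N s (V0 c) \<le> max K0 1 * T s c" using K0 c by force
  qed
  have lin: "lin_on (\<Inter>r. \<Theta> r) V0" unfolding lin_on_def using V0(2,3) by blast
  have VX: "\<forall>d\<in>(\<Inter>r. \<Theta> r). V0 d \<in> X s" using V0(1) by blast
  have K0': "0 \<le> max K0 1" by simp
  note ext = extend_exists[of "\<Theta> s" "T s" "X s" "N s" "\<Inter>r. \<Theta> r" V0 "max K0 1"]
  from ext[OF Tf(1) Xf(2) Tf(3) Tf(5) Tf(6) lin VX K K0']
  obtain L where "lin_on (\<Theta> s) L \<and> (\<forall>x\<in>\<Theta> s. L x \<in> X s) \<and> (\<forall>x\<in>\<Theta> s. N s (L x) \<le> max K0 1 * T s x) \<and> (\<forall>d\<in>(\<Inter>r. \<Theta> r). L d = V0 d)"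
    by blast
  moreover have "0 < max K0 1" by simp
  ultimately show ?thesis by (intro exI[of _ L] exI[of _ "max K0 1"]) simp
qed

end


locale gsetting = fsetting X N \<Theta> T g V0
  for X :: "nat \<Rightarrow> 'a::real_vector set" and N :: "nat \<Rightarrow> 'a \<Rightarrow> real"
    and \<Theta> :: "nat \<Rightarrow> (nat \<Rightarrow> real) set" and T :: "nat \<Rightarrow> (nat \<Rightarrow> real) \<Rightarrow> real"
    and g :: "nat \<Rightarrow> 'a \<Rightarrow> real" and V0 :: "(nat \<Rightarrow> real) \<Rightarrow> 'a" +
  fixes G :: "nat \<Rightarrow> 'a \<Rightarrow> nat \<Rightarrow> real" and B :: "nat \<Rightarrow> real"
    and V :: "nat \<Rightarrow> (nat \<Rightarrow> real) \<Rightarrow> 'a" and K :: "nat \<Rightarrow> real"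
  assumes GB: "\<And>s. 0 < B s" and Glin: "\<And>s. lin_on (X s) (G s)" and GT: "\<And>s x. x \<in> X s \<Longrightarrow> G s x \<in> \<Theta> s"
    and Gbd: "\<And>s x. x \<in> X s \<Longrightarrow> T s (G s x) \<le> B s * N s x"
    and Gg: "\<And>s x. x \<in> (\<Inter>r. X r) \<Longrightarrow> G s x = (\<lambda>i. g i x)"
    and VK: "\<And>s. 0 < K s" and Vlin: "\<And>s. lin_on (\<Theta> s) (V s)" and VX: "\<And>s c. c \<in> \<Theta> s \<Longrightarrow> V s c \<in> X s"
    and Vbd: "\<And>s c. c \<in> \<Theta> s \<Longrightarrow> N s (V s c) \<le> K s * T s c"
    and VV0: "\<And>s c. c \<in> (\<Inter>r. \<Theta> r) \<Longrightarrow> V s c = V0 c"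
begin

lemma Xn: "is_norm_on (X s) (N s)" by (rule Xf(1))
lemma Tn: "is_norm_on (\<Theta> s) (T s)" by (rule Tf(1))

lemma VG: assumes x: "x \<in> X s" shows "V s (G s x) = x"
proof -
  have l1: "lin_on (X s) (\<lambda>x. V s (G s x))" using lin_comp[OF Glin _ Vlin] GT by blast
  have l2: "lin_on (X s) (\<lambda>x. x)" unfolding lin_on_def by simp
  have b1: "\<forall>x\<in>X s. N s (V s (G s x)) \<le> (K s * B s) * N s x"
  proof
    fix x assume x: "x \<in> X s"
    have "N s (V s (G s x)) \<le> K s * T s (G s x)" using Vbd[OF GT[OF x]] .
    also have "\<dots> \<le> K s * (B s * N s x)" using Gbd[OF x] VK[of s] by (intro mult_left_mono) auto
    finally show "N s (V s (G s x)) \<le> (K s * B s) * N s x" by (simp add: mult.assoc)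
  qed
  have eq: "\<forall>d\<in>(\<Inter>r. X r). V s (G s d) = d"
  proof
    fix d assume d: "d \<in> (\<Inter>r. X r)"
    have "V s (G s d) = V0 (\<lambda>i. g i d)" using Gg[OF d] VV0[OF gF[OF d]] by simp
    thus "V s (G s d) = d" using V0(5) d by simp
  qed
  show ?thesis
    using agree_dense[OF Xn Xn Xf(3) l1 _ b1 l2 _ _ eq x, of 1] VX GT by auto
qed

lemma coordG_dual: "(\<lambda>x. G s x i) \<in> dual_set (X s) (N s)"
  using dual_comp(1)[OF Xn Tn coord_dual[OF BKs] Glin _ _ less_imp_le[OF GB]] GT Gbd by blast

lemma FE: "F_ext X N g s i \<in> dual_set (X s) (N s) \<and> (\<forall>x\<in>X s. F_ext X N g s i x = G s x i)"
proof -
  let ?P = "\<lambda>h. h \<in> dual_set (X s) (N s) \<and> (\<forall>x\<in>(\<Inter>r. X r). h x = g i x)"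
  have q: "?P (\<lambda>x. G s x i)" using coordG_dual Gg by simp
  then have h: "?P (F_ext X N g s i)" unfolding F_ext_def using someI_ex[of ?P] by blast
  obtain K1 where K1: "K1 \<ge> 0" "\<forall>x\<in>X s. \<bar>F_ext X N g s i x\<bar> \<le> K1 * N s x" using dual_bound[OF Xn] h by blast
  obtain K2 where K2: "K2 \<ge> 0" "\<forall>x\<in>X s. \<bar>G s x i\<bar> \<le> K2 * N s x" using dual_bound[OF Xn] q by blast
  have "\<forall>x\<in>X s. F_ext X N g s i x = G s x i"
  proof
    fix x assume x: "x \<in> X s"
    show "F_ext X N g s i x = G s x i"
      by (rule agree_dense[OF Xn isn_real Xf(3) _ _ K1(2) _ _ K2(2) _ x])
         (use h q dual_lin in auto)
  qed
  thus ?thesis using h by blast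
qed

lemma FE_eq: "x \<in> X s \<Longrightarrow> (\<lambda>i. F_ext X N g s i x) = G s x" using FE by (simp add: fun_eq_iff)

lemma partA: "banach_frame (X s) (N s) (\<Theta> s) (T s) (F_ext X N g s)"
  unfolding banach_frame_def theta_frame_def bounded_op_def
proof (intro conjI allI ballI exI)
  show "F_ext X N g s i \<in> dual_set (X s) (N s)" for i using FE by blast
  show "(\<lambda>i. F_ext X N g s i f) \<in> \<Theta> s" if "f \<in> X s" for f using FE_eq[OF that] GT[OF that] by simp
  show "0 < 1 / K s" using VK[of s] by simp
  show "1 / K s * N s f \<le> T s (\<lambda>i. F_ext X N g s i f)" if f: "f \<in> X s" for f
  proof -
    have "N s f \<le> K s * T s (G s f)" using Vbd[OF GT[OF f]] VG[OF f] by simp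
    thus ?thesis using FE_eq[OF f] VK[of s] by (simp add: divide_le_eq mult.commute)
  qed
  show "T s (\<lambda>i. F_ext X N g s i f) \<le> B s * N s f" if f: "f \<in> X s" for f using FE_eq[OF f] Gbd[OF f] by simp
  show "V s c \<in> X s" if "c \<in> \<Theta> s" for c using VX[OF that] .
  show "V s (c + d) = V s c + V s d" if "c \<in> \<Theta> s" "d \<in> \<Theta> s" for c d using lin_add[OF Vlin that] .
  show "V s (a *\<^sub>R c) = a *\<^sub>R V s c" if "c \<in> \<Theta> s" for a c using lin_scale[OF Vlin that] .
  show "N s (V s c) \<le> K s * T s c" if "c \<in> \<Theta> s" for c using Vbd[OF that] .
  show "V s (\<lambda>i. F_ext X N g s i f) = f" if "f \<in> X s" for f using FE_eq[OF that] VG[OF that] by simp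
qed

end

lemma dual_add:
  assumes X: "is_norm_on X N" and "G1 \<in> dual_set X N" "G2 \<in> dual_set X N"
  shows "(\<lambda>z. G1 z + G2 z) \<in> dual_set X N"
proof -
  obtain K1 where K1: "K1 \<ge> 0" "\<forall>x\<in>X. \<bar>G1 x\<bar> \<le> K1 * N x" using dual_bound[OF X assms(2)] by blast
  obtain K2 where K2: "K2 \<ge> 0" "\<forall>x\<in>X. \<bar>G2 x\<bar> \<le> K2 * N x" using dual_bound[OF X assms(3)] by blast
  have l: "lin_on X (\<lambda>z. G1 z + G2 z)" unfolding lin_on_def
    using lin_add[OF dual_lin[OF assms(2)]] lin_add[OF dual_lin[OF assms(3)]]
      lin_scale[OF dual_lin[OF assms(2)]] lin_scale[OF dual_lin[OF assms(3)]]
    by (simp add: distrib_left)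
  have "\<forall>x\<in>X. \<bar>G1 x + G2 x\<bar> \<le> (K1 + K2) * N x"
  proof
    fix x assume x: "x \<in> X"
    have "\<bar>G1 x + G2 x\<bar> \<le> \<bar>G1 x\<bar> + \<bar>G2 x\<bar>" by (rule abs_triangle_ineq)
    also have "\<dots> \<le> K1 * N x + K2 * N x" using K1(2) K2(2) x by (meson add_mono)
    finally show "\<bar>G1 x + G2 x\<bar> \<le> (K1 + K2) * N x" by (simp add: distrib_right)
  qed
  thus ?thesis by (rule dual_setI[OF l])
qed

lemma dual_smult:
  assumes X: "is_norm_on X N" and "G1 \<in> dual_set X N"
  shows "(\<lambda>z. a * G1 z) \<in> dual_set X N"
proof -
  obtain K1 where K1: "K1 \<ge> 0" "\<forall>x\<in>X. \<bar>G1 x\<bar> \<le> K1 * N x" using dual_bound[OF X assms(2)] by blast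
  have l: "lin_on X (\<lambda>z. a * G1 z)" unfolding lin_on_def
    using lin_add[OF dual_lin[OF assms(2)]] lin_scale[OF dual_lin[OF assms(2)]]
    by (simp add: distrib_left mult.left_commute)
  have "\<forall>x\<in>X. \<bar>a * G1 x\<bar> \<le> (\<bar>a\<bar> * K1) * N x"
  proof
    fix x assume x: "x \<in> X"
    have "\<bar>a * G1 x\<bar> = \<bar>a\<bar> * \<bar>G1 x\<bar>" by (simp add: abs_mult)
    also have "\<dots> \<le> \<bar>a\<bar> * (K1 * N x)" using K1(2) x by (intro mult_left_mono) auto
    finally show "\<bar>a * G1 x\<bar> \<le> (\<bar>a\<bar> * K1) * N x" by (simp add: mult.assoc)
  qed
  thus ?thesis by (rule dual_setI[OF l])
qed

lemma sum_evec: "(\<Sum>i<n. a i * e_vec j i) = (if j < n then a j else (0::real))"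
  by (induction n) (auto simp: e_vec_def less_Suc_eq)

context gsetting
begin

lemma fV: "V s (e_vec i) = V0 (e_vec i)" using VV0[OF evF] .
lemma fXF: "V0 (e_vec i) \<in> (\<Inter>r. X r)" using V0(1) evF by blast

lemma recon:
  assumes CB: "CB_space (\<Theta> s) (T s)" and c: "c \<in> \<Theta> s"
  shows "(\<lambda>n. N s (V s c - (\<Sum>i<n. c i *\<^sub>R V0 (e_vec i)))) \<longlonglongrightarrow> 0"
proof (rule lim0_cmp)
  let ?P = "\<lambda>n. (\<Sum>i<n. c i *\<^sub>R e_vec i)"
  have e: "\<forall>i. e_vec i \<in> \<Theta> s" using ev by blast
  have P: "?P n \<in> \<Theta> s" for n using Pn_mem[OF Tn e] .
  have eq: "V s c - (\<Sum>i<n. c i *\<^sub>R V0 (e_vec i)) = V s (c - ?P n)" for n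
  proof -
    have "V s (?P n) = (\<Sum>i<n. c i *\<^sub>R V s (e_vec i))" using lin_sum[OF Vlin Tn, where n=n and v=e_vec and c=c] ev by blast
    then have "(\<Sum>i<n. c i *\<^sub>R V0 (e_vec i)) = V s (?P n)" using fV by simp
    thus ?thesis using lin_diff[OF Vlin Tn c P] by simp
  qed
  show "0 \<le> N s (V s c - (\<Sum>i<n. c i *\<^sub>R V0 (e_vec i)))" for n
    unfolding eq using isn_facts(4)[OF Xn VX[OF isn_minus(1)[OF Tn c P]]] .
  show "N s (V s c - (\<Sum>i<n. c i *\<^sub>R V0 (e_vec i))) \<le> K s * T s (c - ?P n)" for n
    unfolding eq using Vbd[OF isn_minus(1)[OF Tn c P]] .
  have "(\<lambda>n. T s (c - ?P n)) \<longlonglongrightarrow> 0" using CB c unfolding CB_space_def by blast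
  from tendsto_mult_left[OF this, of "K s"]
  show "(\<lambda>n. K s * T s (c - ?P n)) \<longlonglongrightarrow> 0" by simp
qed

lemma expXs: assumes CB: "\<forall>s. CB_space (\<Theta> s) (T s)" shows "exp_Xs X N g (\<lambda>i. V0 (e_vec i))"
  unfolding exp_Xs_def
proof (intro allI ballI)
  fix s x assume x: "x \<in> X s"
  have "(\<Sum>i<n. F_ext X N g s i x *\<^sub>R V0 (e_vec i)) = (\<Sum>i<n. G s x i *\<^sub>R V0 (e_vec i))" for n
    using FE x by simp
  moreover have "x = V s (G s x)" using VG[OF x] by simp
  ultimately show "(\<lambda>n. N s (x - (\<Sum>i<n. F_ext X N g s i x *\<^sub>R V0 (e_vec i)))) \<longlonglongrightarrow> 0"
    using recon[OF CB[rule_format] GT[OF x]] by simp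
qed

lemma expXF: assumes CB: "\<forall>s. CB_space (\<Theta> s) (T s)" shows "exp_XF X N g (\<lambda>i. V0 (e_vec i))"
  unfolding exp_XF_def
proof (intro allI ballI)
  fix s x assume x: "x \<in> (\<Inter>r. X r)"
  then have xs: "x \<in> X s" by blast
  have "(\<Sum>i<n. g i x *\<^sub>R V0 (e_vec i)) = (\<Sum>i<n. G s x i *\<^sub>R V0 (e_vec i))" for n
    using Gg[OF x] by simp
  moreover have "x = V s (G s x)" using VG[OF xs] by simp
  ultimately show "(\<lambda>n. N s (x - (\<Sum>i<n. g i x *\<^sub>R V0 (e_vec i)))) \<longlonglongrightarrow> 0"
    using recon[OF CB[rule_format] GT[OF xs]] by simp
qed

lemma XFn: "is_norm_on (\<Inter>r. X r) (N s)"
  by (rule isn_sub[OF Xn Xf(4) _ Xf(5) Xf(6)]) (use isn_facts(1)[OF Xf(1)] in blast)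

lemma expXFd: assumes CB: "\<forall>s. CB_space (\<Theta> s) (T s)" shows "exp_XF_dual X N g (\<lambda>i. V0 (e_vec i))"
  unfolding exp_XF_dual_def
proof (intro allI ballI)
  fix h x assume h: "h \<in> frechet_dual X N" and x: "x \<in> (\<Inter>r. X r)"
  obtain s0 K0 where K0: "\<forall>x\<in>(\<Inter>r. X r). \<bar>h x\<bar> \<le> K0 * N s0 x" using h unfolding frechet_dual_def by blast
  have hl: "lin_on (\<Inter>r. X r) h" using h unfolding frechet_dual_def lin_on_def by simp
  let ?S = "\<lambda>n. (\<Sum>i<n. g i x *\<^sub>R V0 (e_vec i))"
  have S: "?S n \<in> (\<Inter>r. X r)" for n using isn_sum[OF XFn, where n=n and v="\<lambda>i. V0 (e_vec i)" and c="\<lambda>i. g i x"] fXF by blast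
  have hS: "h (?S n) = (\<Sum>i<n. h (V0 (e_vec i)) * g i x)" for n
    using lin_sum[OF hl XFn, where n=n and v="\<lambda>i. V0 (e_vec i)" and c="\<lambda>i. g i x"] fXF by (simp add: mult.commute)
  have "(\<lambda>n. \<bar>(\<Sum>i<n. h (V0 (e_vec i)) * g i x) - h x\<bar>) \<longlonglongrightarrow> 0"
  proof (rule lim0_cmp)
    show "0 \<le> \<bar>(\<Sum>i<n. h (V0 (e_vec i)) * g i x) - h x\<bar>" for n by simp
    show "\<bar>(\<Sum>i<n. h (V0 (e_vec i)) * g i x) - h x\<bar> \<le> \<bar>K0\<bar> * N s0 (x - ?S n)" for n
    proof -
      have xS: "x - ?S n \<in> (\<Inter>r. X r)" using isn_minus(1)[OF XFn x S] .
      have "(\<Sum>i<n. h (V0 (e_vec i)) * g i x) - h x = - h (x - ?S n)"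
        using lin_diff[OF hl XFn x S] hS by simp
      then have "\<bar>(\<Sum>i<n. h (V0 (e_vec i)) * g i x) - h x\<bar> = \<bar>h (x - ?S n)\<bar>" by simp
      also have "\<dots> \<le> K0 * N s0 (x - ?S n)" using K0 xS by blast
      also have "\<dots> \<le> \<bar>K0\<bar> * N s0 (x - ?S n)"
        using isn_facts(4)[OF XFn xS] by (intro mult_right_mono) auto
      finally show ?thesis .
    qed
    have "(\<lambda>n. N s0 (x - ?S n)) \<longlonglongrightarrow> 0" using expXF[OF CB] x unfolding exp_XF_def by blast
    from tendsto_mult_left[OF this, of "\<bar>K0\<bar>"]
    show "(\<lambda>n. \<bar>K0\<bar> * N s0 (x - ?S n)) \<longlonglongrightarrow> 0" by simp
  qed
  then show "(\<lambda>n. \<Sum>i<n. h (V0 (e_vec i)) * g i x) \<longlonglongrightarrow> h x"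
    by (simp add: tendsto_rabs_zero_iff LIM_zero_iff)
qed

lemma Hh: assumes h: "h \<in> dual_set (X s) (N s)"
  shows "(\<lambda>c. h (V s c)) \<in> dual_set (\<Theta> s) (T s)" "fnorm (\<Theta> s) (T s) (\<lambda>c. h (V s c)) \<le> fnorm (X s) (N s) h * K s"
  using dual_comp[OF Tn Xn h Vlin _ _ less_imp_le[OF VK]] VX Vbd by blast+

lemma Hh_e: "(\<lambda>i. h (V0 (e_vec i))) = (\<lambda>i. (\<lambda>c. h (V s c)) (e_vec i))" using fV by simp

lemma sdn_h: assumes CB: "CB_space (\<Theta> s) (T s)" and h: "h \<in> dual_set (X s) (N s)"
  shows "seq_dual_norm (\<Theta> s) (T s) (\<lambda>i. h (V0 (e_vec i))) = fnorm (\<Theta> s) (T s) (\<lambda>c. h (V s c))"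
  by (rule sdn_eq[OF CB Hh(1)[OF h]]) (simp add: fV)

lemma mem_sd: assumes h: "h \<in> dual_set (X s) (N s)" shows "(\<lambda>i. h (V0 (e_vec i))) \<in> seq_dual (\<Theta> s) (T s)"
  unfolding seq_dual_def using Hh(1)[OF h] fV[of s, symmetric] by (intro CollectI bexI[of _ "\<lambda>c. h (V s c)"]) auto

lemma lower: assumes h: "h \<in> dual_set (X s) (N s)"
  shows "fnorm (X s) (N s) h \<le> B s * fnorm (\<Theta> s) (T s) (\<lambda>c. h (V s c))"
proof -
  let ?H = "\<lambda>c. h (V s c)"
  have fH: "0 \<le> fnorm (\<Theta> s) (T s) ?H" using fnorm_nonneg[OF Tn Hh(1)[OF h]] .
  have "\<forall>x\<in>X s. \<bar>h x\<bar> \<le> (fnorm (\<Theta> s) (T s) ?H * B s) * N s x"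
  proof
    fix x assume x: "x \<in> X s"
    have "\<bar>h x\<bar> = \<bar>?H (G s x)\<bar>" using VG[OF x] by simp
    also have "\<dots> \<le> fnorm (\<Theta> s) (T s) ?H * T s (G s x)" using fnorm_bound[OF Tn Hh(1)[OF h] GT[OF x]] .
    also have "\<dots> \<le> fnorm (\<Theta> s) (T s) ?H * (B s * N s x)" using Gbd[OF x] fH by (rule mult_left_mono)
    finally show "\<bar>h x\<bar> \<le> (fnorm (\<Theta> s) (T s) ?H * B s) * N s x" by (simp add: mult.assoc)
  qed
  from fnorm_le[OF Xn _ this] show ?thesis using fH GB[of s] by (simp add: mult.commute)
qed

lemma bessel: assumes CB: "CB_space (\<Theta> s) (T s)"
  shows "dual_bessel (X s) (N s) (seq_dual (\<Theta> s) (T s)) (seq_dual_norm (\<Theta> s) (T s)) (\<lambda>i. V0 (e_vec i))"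
  unfolding dual_bessel_def
proof (intro conjI allI ballI exI)
  show "V0 (e_vec i) \<in> X s" for i using fXF by blast
  show "(\<lambda>i. h (V0 (e_vec i))) \<in> seq_dual (\<Theta> s) (T s)" if "h \<in> dual_set (X s) (N s)" for h using mem_sd[OF that] .
  show "seq_dual_norm (\<Theta> s) (T s) (\<lambda>i. h (V0 (e_vec i))) \<le> K s * fnorm (X s) (N s) h" if h: "h \<in> dual_set (X s) (N s)" for h
    using sdn_h[OF CB h] Hh(2)[OF h] by (simp add: mult.commute)
qed

lemma frame: assumes CB: "CB_space (\<Theta> s) (T s)"
  shows "dual_frame (X s) (N s) (seq_dual (\<Theta> s) (T s)) (seq_dual_norm (\<Theta> s) (T s)) (\<lambda>i. V0 (e_vec i))"
  unfolding dual_frame_def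
proof (intro conjI allI ballI exI)
  show "V0 (e_vec i) \<in> X s" for i using fXF by blast
  show "(\<lambda>i. h (V0 (e_vec i))) \<in> seq_dual (\<Theta> s) (T s)" if "h \<in> dual_set (X s) (N s)" for h using mem_sd[OF that] .
  show "0 < 1 / B s" using GB[of s] by simp
  show "seq_dual_norm (\<Theta> s) (T s) (\<lambda>i. h (V0 (e_vec i))) \<le> K s * fnorm (X s) (N s) h" if h: "h \<in> dual_set (X s) (N s)" for h
    using sdn_h[OF CB h] Hh(2)[OF h] by (simp add: mult.commute)
  show "1 / B s * fnorm (X s) (N s) h \<le> seq_dual_norm (\<Theta> s) (T s) (\<lambda>i. h (V0 (e_vec i)))" if h: "h \<in> dual_set (X s) (N s)" for h
    using sdn_h[OF CB h] lower[OF h] GB[of s] by (simp add: divide_le_eq mult.commute)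
qed

lemma expXsd:
  assumes shrink: "\<forall>s. \<forall>H\<in>dual_set (\<Theta> s) (T s). (\<lambda>n. fnorm (\<Theta> s) (T s) (\<lambda>c. H c - (\<Sum>i<n. H (e_vec i) * c i))) \<longlonglongrightarrow> 0"
  shows "exp_Xs_dual X N g (\<lambda>i. V0 (e_vec i))"
  unfolding exp_Xs_dual_def
proof (intro allI ballI)
  fix s h assume h: "h \<in> dual_set (X s) (N s)"
  let ?H = "\<lambda>c. h (V s c)"
  let ?D = "\<lambda>n c. ?H c - (\<Sum>i<n. ?H (e_vec i) * c i)"
  obtain l where l: "lambda_BK (\<Theta> s) (T s) l" using lBK by blast
  have Dd: "?D n \<in> dual_set (\<Theta> s) (T s)" for n using Dn_dual[OF l Hh(1)[OF h]] .
  have fD: "0 \<le> fnorm (\<Theta> s) (T s) (?D n)" for n using fnorm_nonneg[OF Tn Dd] .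
  have bnd: "\<forall>x\<in>X s. \<bar>h x - (\<Sum>i<n. h (V0 (e_vec i)) * F_ext X N g s i x)\<bar> \<le> (fnorm (\<Theta> s) (T s) (?D n) * B s) * N s x" for n
  proof
    fix x assume x: "x \<in> X s"
    have "h x - (\<Sum>i<n. h (V0 (e_vec i)) * F_ext X N g s i x) = ?D n (G s x)"
      using VG[OF x] FE x fV by simp
    then have "\<bar>h x - (\<Sum>i<n. h (V0 (e_vec i)) * F_ext X N g s i x)\<bar> = \<bar>?D n (G s x)\<bar>" by simp
    also have "\<dots> \<le> fnorm (\<Theta> s) (T s) (?D n) * T s (G s x)" using fnorm_bound[OF Tn Dd GT[OF x]] .
    also have "\<dots> \<le> fnorm (\<Theta> s) (T s) (?D n) * (B s * N s x)" using Gbd[OF x] fD by (rule mult_left_mono)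
    finally show "\<bar>h x - (\<Sum>i<n. h (V0 (e_vec i)) * F_ext X N g s i x)\<bar> \<le> (fnorm (\<Theta> s) (T s) (?D n) * B s) * N s x"
      by (simp add: mult.assoc)
  qed
  show "(\<lambda>n. fnorm (X s) (N s) (\<lambda>x. h x - (\<Sum>i<n. h (V0 (e_vec i)) * F_ext X N g s i x))) \<longlonglongrightarrow> 0"
  proof (rule lim0_cmp)
    show "0 \<le> fnorm (X s) (N s) (\<lambda>x. h x - (\<Sum>i<n. h (V0 (e_vec i)) * F_ext X N g s i x))" for n
      by (rule fnorm_nonneg') (use bnd[of n] fD[of n] GB[of s] in \<open>auto intro!: exI[of _ "fnorm (\<Theta> s) (T s) (?D n) * B s"]\<close>)
    show "fnorm (X s) (N s) (\<lambda>x. h x - (\<Sum>i<n. h (V0 (e_vec i)) * F_ext X N g s i x)) \<le> fnorm (\<Theta> s) (T s) (?D n) * B s" for n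
      by (rule fnorm_le[OF Xn _ bnd]) (use fD[of n] GB[of s] in simp)
    have "(\<lambda>n. fnorm (\<Theta> s) (T s) (?D n)) \<longlonglongrightarrow> 0" using shrink[rule_format, OF Hh(1)[OF h]] by simp
    from tendsto_mult_right[OF this, of "B s"]
    show "(\<lambda>n. fnorm (\<Theta> s) (T s) (?D n) * B s) \<longlonglongrightarrow> 0" by simp
  qed
qed

lemma shrink_c:
  assumes CB: "CB_space (\<Theta> s) (T s)" and CBd: "CB_space (seq_dual (\<Theta> s) (T s)) (seq_dual_norm (\<Theta> s) (T s))"
    and H: "H \<in> dual_set (\<Theta> s) (T s)"
  shows "(\<lambda>n. fnorm (\<Theta> s) (T s) (\<lambda>c. H c - (\<Sum>i<n. H (e_vec i) * c i))) \<longlonglongrightarrow> 0"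
proof -
  obtain l where l: "lambda_BK (\<Theta> s) (T s) l" using lBK by blast
  let ?d = "\<lambda>i. H (e_vec i)"
  have d: "?d \<in> seq_dual (\<Theta> s) (T s)" unfolding seq_dual_def using H by auto
  have eq: "seq_dual_norm (\<Theta> s) (T s) (?d - (\<Sum>i<n. ?d i *\<^sub>R e_vec i))
           = fnorm (\<Theta> s) (T s) (\<lambda>c. H c - (\<Sum>i<n. H (e_vec i) * c i))" for n
  proof (rule sdn_eq[OF CB Dn_dual[OF l H]], rule allI)
    fix j
    show "(?d - (\<Sum>i<n. ?d i *\<^sub>R e_vec i)) j = H (e_vec j) - (\<Sum>i<n. H (e_vec i) * e_vec j i)"
      by (simp add: Pn_apply sum_evec)
  qed
  have "(\<lambda>n. seq_dual_norm (\<Theta> s) (T s) (?d - (\<Sum>i<n. ?d i *\<^sub>R e_vec i))) \<longlonglongrightarrow> 0"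
    using CBd d unfolding CB_space_def by blast
  thus ?thesis unfolding eq .
qed

lemma dbf: assumes CB: "CB_space (\<Theta> s) (T s)"
  shows "dual_banach_frame (X s) (N s) (seq_dual (\<Theta> s) (T s)) (seq_dual_norm (\<Theta> s) (T s)) (\<lambda>i. V0 (e_vec i))"
proof -
  let ?S = "\<lambda>c. SOME G'. G' \<in> dual_set (\<Theta> s) (T s) \<and> (\<forall>i. c i = G' (e_vec i))"
  let ?W = "\<lambda>c x. ?S c (G s x)"
  have Sp: "?S c \<in> dual_set (\<Theta> s) (T s) \<and> (\<forall>z\<in>\<Theta> s. ?S c z = S0 z)"
    if "S0 \<in> dual_set (\<Theta> s) (T s)" "\<forall>i. c i = S0 (e_vec i)" for c S0
    using sd_some[OF CB that] .
  have Sd: "?S c \<in> dual_set (\<Theta> s) (T s)" if "c \<in> seq_dual (\<Theta> s) (T s)" for c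
    using that Sp unfolding seq_dual_def by blast
  show ?thesis unfolding dual_banach_frame_def
  proof (intro conjI exI[of _ ?W] ballI allI)
    show "dual_frame (X s) (N s) (seq_dual (\<Theta> s) (T s)) (seq_dual_norm (\<Theta> s) (T s)) (\<lambda>i. V0 (e_vec i))"
      using frame[OF CB] .
    show "?W c \<in> dual_set (X s) (N s)" if c: "c \<in> seq_dual (\<Theta> s) (T s)" for c
      using dual_comp(1)[OF Xn Tn Sd[OF c] Glin _ _ less_imp_le[OF GB]] GT Gbd by blast
    show "?W (c + d) x = ?W c x + ?W d x" if c: "c \<in> seq_dual (\<Theta> s) (T s)" and d: "d \<in> seq_dual (\<Theta> s) (T s)"
      and x: "x \<in> X s" for c d x
    proof -
      obtain Sc where Sc: "Sc \<in> dual_set (\<Theta> s) (T s)" "\<forall>i. c i = Sc (e_vec i)" using c unfolding seq_dual_def by blast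
      obtain Sd where Sd: "Sd \<in> dual_set (\<Theta> s) (T s)" "\<forall>i. d i = Sd (e_vec i)" using d unfolding seq_dual_def by blast
      have "\<forall>i. (c + d) i = (\<lambda>z. Sc z + Sd z) (e_vec i)" using Sc(2) Sd(2) by simp
      from Sp[OF dual_add[OF Tn Sc(1) Sd(1)] this] Sp[OF Sc] Sp[OF Sd] GT[OF x]
      show ?thesis by simp
    qed
    show "?W (a *\<^sub>R c) x = a * ?W c x" if c: "c \<in> seq_dual (\<Theta> s) (T s)" and x: "x \<in> X s" for a c x
    proof -
      obtain Sc where Sc: "Sc \<in> dual_set (\<Theta> s) (T s)" "\<forall>i. c i = Sc (e_vec i)" using c unfolding seq_dual_def by blast
      have "\<forall>i. (a *\<^sub>R c) i = (\<lambda>z. a * Sc z) (e_vec i)" using Sc(2) by (simp add: scaleR_fun_apply)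
      from Sp[OF dual_smult[OF Tn Sc(1)] this] Sp[OF Sc] GT[OF x]
      show ?thesis by simp
    qed
    show "\<exists>K'. \<forall>c\<in>seq_dual (\<Theta> s) (T s). fnorm (X s) (N s) (?W c) \<le> K' * seq_dual_norm (\<Theta> s) (T s) c"
    proof (intro exI[of _ "B s"] ballI)
      fix c assume c: "c \<in> seq_dual (\<Theta> s) (T s)"
      have fS: "0 \<le> fnorm (\<Theta> s) (T s) (?S c)" using fnorm_nonneg[OF Tn Sd[OF c]] .
      have "fnorm (X s) (N s) (?W c) \<le> fnorm (\<Theta> s) (T s) (?S c) * B s"
        using dual_comp(2)[OF Xn Tn Sd[OF c] Glin _ _ less_imp_le[OF GB]] GT Gbd by blast
      thus "fnorm (X s) (N s) (?W c) \<le> B s * seq_dual_norm (\<Theta> s) (T s) c"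
        unfolding seq_dual_norm_def by (simp add: mult.commute)
    qed
    show "?W (\<lambda>i. h (V0 (e_vec i))) x = h x" if h: "h \<in> dual_set (X s) (N s)" and x: "x \<in> X s" for h x
    proof -
      have "\<forall>i. h (V0 (e_vec i)) = (\<lambda>c. h (V s c)) (e_vec i)" using fV by simp
      from Sp[OF Hh(1)[OF h] this] GT[OF x] VG[OF x]
      show ?thesis by simp
    qed
  qed
qed

end


theorem theorem3p4:
  fixes X :: "nat \<Rightarrow> 'a::real_vector set" and N :: "nat \<Rightarrow> 'a \<Rightarrow> real"
    and \<Theta> :: "nat \<Rightarrow> (nat \<Rightarrow> real) set" and T :: "nat \<Rightarrow> (nat \<Rightarrow> real) \<Rightarrow> real"
    and g :: "nat \<Rightarrow> 'a \<Rightarrow> real"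
  assumes "F_seq X N"
    and "F_seq \<Theta> T"
    and "\<forall>s. \<exists>l. lambda_BK (\<Theta> s) (T s) l"
    and "F_frame X N \<Theta> T g"
  shows "(\<forall>s. banach_frame (X s) (N s) (\<Theta> s) (T s) (F_ext X N g s))
    \<and> ((\<forall>s. CB_space (\<Theta> s) (T s)) \<longrightarrow>
        (\<exists>f. (\<forall>i. f i \<in> (\<Inter>r. X r)) \<and> DF_bessel X N \<Theta> T f
             \<and> exp_XF X N g f \<and> exp_XF_dual X N g f \<and> exp_Xs X N g f))
    \<and> ((\<forall>s. CB_space (\<Theta> s) (T s) \<and> CB_space (seq_dual (\<Theta> s) (T s)) (seq_dual_norm (\<Theta> s) (T s))) \<longrightarrow>
        (\<exists>f. (\<forall>i. f i \<in> (\<Inter>r. X r)) \<and> pre_DF_frame X N \<Theta> T f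
             \<and> exp_XF X N g f \<and> exp_XF_dual X N g f \<and> exp_Xs X N g f \<and> exp_Xs_dual X N g f))
    \<and> ((\<forall>s. CB_space (\<Theta> s) (T s) \<and> reflexive_on (\<Theta> s) (T s)) \<longrightarrow>
        (\<exists>f. (\<forall>i. f i \<in> (\<Inter>r. X r)) \<and> DF_frame X N \<Theta> T f
             \<and> exp_XF X N g f \<and> exp_XF_dual X N g f \<and> exp_Xs X N g f \<and> exp_Xs_dual X N g f))"
proof -
  note F = assms(4)[unfolded F_frame_def]
  have pre: "pre_F_frame X N \<Theta> T g" using F by blast
  obtain V0 where V0: "\<forall>c\<in>(\<Inter>r. \<Theta> r). V0 c \<in> (\<Inter>r. X r)"
      "\<forall>c\<in>(\<Inter>r. \<Theta> r). \<forall>d\<in>(\<Inter>r. \<Theta> r). V0 (c + d) = V0 c + V0 d"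
      "\<forall>c\<in>(\<Inter>r. \<Theta> r). \<forall>a. V0 (a *\<^sub>R c) = a *\<^sub>R V0 c"
      "\<forall>s. \<exists>K. \<forall>c\<in>(\<Inter>r. \<Theta> r). N s (V0 c) \<le> K * T s c"
      "\<forall>f\<in>(\<Inter>r. X r). V0 (\<lambda>i. g i f) = f"
    using F by blast
  interpret fsetting X N \<Theta> T g V0
    by (rule fsetting.intro) (fact assms(1), fact assms(2), fact assms(3), fact pre, fact V0(1), fact V0(2), fact V0(3), fact V0(4), fact V0(5))
  have "\<forall>s. \<exists>p. 0 < snd p \<and> lin_on (X s) (fst p) \<and> (\<forall>x\<in>X s. fst p x \<in> \<Theta> s) \<and> (\<forall>x\<in>X s. T s (fst p x) \<le> snd p * N s x)
   \<and> (\<forall>x\<in>(\<Inter>r. X r). fst p x = (\<lambda>i. g i x))"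
  proof
    fix s
    obtain G B where "0 < B \<and> lin_on (X s) G \<and> (\<forall>x\<in>X s. G x \<in> \<Theta> s) \<and> (\<forall>x\<in>X s. T s (G x) \<le> B * N s x)
      \<and> (\<forall>x\<in>(\<Inter>r. X r). G x = (\<lambda>i. g i x))" using Gs_ex[of s] by blast
    thus "\<exists>p. 0 < snd p \<and> lin_on (X s) (fst p) \<and> (\<forall>x\<in>X s. fst p x \<in> \<Theta> s) \<and> (\<forall>x\<in>X s. T s (fst p x) \<le> snd p * N s x)
      \<and> (\<forall>x\<in>(\<Inter>r. X r). fst p x = (\<lambda>i. g i x))" by (intro exI[of _ "(G, B)"]) simp
  qed
  then obtain pG where pG: "\<forall>s. 0 < snd (pG s) \<and> lin_on (X s) (fst (pG s)) \<and> (\<forall>x\<in>X s. fst (pG s) x \<in> \<Theta> s)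
     \<and> (\<forall>x\<in>X s. T s (fst (pG s) x) \<le> snd (pG s) * N s x) \<and> (\<forall>x\<in>(\<Inter>r. X r). fst (pG s) x = (\<lambda>i. g i x))"
    by (rule choice[THEN exE])
  have "\<forall>s. \<exists>p. 0 < snd p \<and> lin_on (\<Theta> s) (fst p) \<and> (\<forall>c\<in>\<Theta> s. fst p c \<in> X s) \<and> (\<forall>c\<in>\<Theta> s. N s (fst p c) \<le> snd p * T s c)
   \<and> (\<forall>c\<in>(\<Inter>r. \<Theta> r). fst p c = V0 c)"
  proof
    fix s
    obtain V K where "0 < K \<and> lin_on (\<Theta> s) V \<and> (\<forall>c\<in>\<Theta> s. V c \<in> X s) \<and> (\<forall>c\<in>\<Theta> s. N s (V c) \<le> K * T s c)
      \<and> (\<forall>c\<in>(\<Inter>r. \<Theta> r). V c = V0 c)" using Vs_ex[of s] by blast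
    thus "\<exists>p. 0 < snd p \<and> lin_on (\<Theta> s) (fst p) \<and> (\<forall>c\<in>\<Theta> s. fst p c \<in> X s) \<and> (\<forall>c\<in>\<Theta> s. N s (fst p c) \<le> snd p * T s c)
      \<and> (\<forall>c\<in>(\<Inter>r. \<Theta> r). fst p c = V0 c)" by (intro exI[of _ "(V, K)"]) simp
  qed
  then obtain pV where pV: "\<forall>s. 0 < snd (pV s) \<and> lin_on (\<Theta> s) (fst (pV s)) \<and> (\<forall>c\<in>\<Theta> s. fst (pV s) c \<in> X s)
     \<and> (\<forall>c\<in>\<Theta> s. N s (fst (pV s) c) \<le> snd (pV s) * T s c) \<and> (\<forall>c\<in>(\<Inter>r. \<Theta> r). fst (pV s) c = V0 c)"
    by (rule choice[THEN exE])
  interpret gsetting X N \<Theta> T g V0 "\<lambda>s. fst (pG s)" "\<lambda>s. snd (pG s)" "\<lambda>s. fst (pV s)" "\<lambda>s. snd (pV s)"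
    by (rule gsetting.intro[OF fsetting_axioms], rule gsetting_axioms.intro) (use pG pV in simp_all)
  let ?f = "\<lambda>i. V0 (e_vec i)"
  have fX: "\<forall>i. ?f i \<in> (\<Inter>r. X r)" using fXF by blast
  show ?thesis
  proof (intro conjI impI)
    show "\<forall>s. banach_frame (X s) (N s) (\<Theta> s) (T s) (F_ext X N g s)" using partA by blast
  next
    assume CB: "\<forall>s. CB_space (\<Theta> s) (T s)"
    show "\<exists>f. (\<forall>i. f i \<in> (\<Inter>r. X r)) \<and> DF_bessel X N \<Theta> T f \<and> exp_XF X N g f \<and> exp_XF_dual X N g f \<and> exp_Xs X N g f"
    proof (intro exI[of _ ?f] conjI)
      show "\<forall>i. ?f i \<in> (\<Inter>r. X r)" by (rule fX)
      show "DF_bessel X N \<Theta> T ?f" unfolding DF_bessel_def using bessel CB by blast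
      show "exp_XF X N g ?f" by (rule expXF[OF CB])
      show "exp_XF_dual X N g ?f" by (rule expXFd[OF CB])
      show "exp_Xs X N g ?f" by (rule expXs[OF CB])
    qed
  next
    assume CB2: "\<forall>s. CB_space (\<Theta> s) (T s) \<and> CB_space (seq_dual (\<Theta> s) (T s)) (seq_dual_norm (\<Theta> s) (T s))"
    then have CB: "\<forall>s. CB_space (\<Theta> s) (T s)" by blast
    have sh: "\<forall>s. \<forall>H\<in>dual_set (\<Theta> s) (T s). (\<lambda>n. fnorm (\<Theta> s) (T s) (\<lambda>c. H c - (\<Sum>i<n. H (e_vec i) * c i))) \<longlonglongrightarrow> 0"
      using shrink_c CB2 by blast
    show "\<exists>f. (\<forall>i. f i \<in> (\<Inter>r. X r)) \<and> pre_DF_frame X N \<Theta> T f \<and> exp_XF X N g f \<and> exp_XF_dual X N g f \<and> exp_Xs X N g f \<and> exp_Xs_dual X N g f"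
    proof (intro exI[of _ ?f] conjI)
      show "\<forall>i. ?f i \<in> (\<Inter>r. X r)" by (rule fX)
      show "pre_DF_frame X N \<Theta> T ?f" unfolding pre_DF_frame_def using frame CB by blast
      show "exp_XF X N g ?f" by (rule expXF[OF CB])
      show "exp_XF_dual X N g ?f" by (rule expXFd[OF CB])
      show "exp_Xs X N g ?f" by (rule expXs[OF CB])
      show "exp_Xs_dual X N g ?f" by (rule expXsd[OF sh])
    qed
  next
    assume CB2: "\<forall>s. CB_space (\<Theta> s) (T s) \<and> reflexive_on (\<Theta> s) (T s)"
    then have CB: "\<forall>s. CB_space (\<Theta> s) (T s)" by blast
    have sh: "\<forall>s. \<forall>H\<in>dual_set (\<Theta> s) (T s). (\<lambda>n. fnorm (\<Theta> s) (T s) (\<lambda>c. H c - (\<Sum>i<n. H (e_vec i) * c i))) \<longlonglongrightarrow> 0"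
    proof (intro allI ballI)
      fix s H assume H: "H \<in> dual_set (\<Theta> s) (T s)"
      obtain l where l: "lambda_BK (\<Theta> s) (T s) l" using assms(3) by blast
      show "(\<lambda>n. fnorm (\<Theta> s) (T s) (\<lambda>c. H c - (\<Sum>i<n. H (e_vec i) * c i))) \<longlonglongrightarrow> 0"
        by (rule shrinking[OF l _ H]) (use CB2 in blast)
    qed
    show "\<exists>f. (\<forall>i. f i \<in> (\<Inter>r. X r)) \<and> DF_frame X N \<Theta> T f \<and> exp_XF X N g f \<and> exp_XF_dual X N g f \<and> exp_Xs X N g f \<and> exp_Xs_dual X N g f"
    proof (intro exI[of _ ?f] conjI)
      show "\<forall>i. ?f i \<in> (\<Inter>r. X r)" by (rule fX)
      show "DF_frame X N \<Theta> T ?f" unfolding DF_frame_def using dbf CB by blast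
      show "exp_XF X N g ?f" by (rule expXF[OF CB])
      show "exp_XF_dual X N g ?f" by (rule expXFd[OF CB])
      show "exp_Xs X N g ?f" by (rule expXs[OF CB])
      show "exp_Xs_dual X N g ?f" by (rule expXsd[OF sh])
    qed
  qed
qed


end
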